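(* In the sequent calculus $\mathsf{S.ConstCKCEM}$, the rules $\mathsf{w_L}$ (from $\Gamma\Rightarrow\Delta$ infer $\Gamma,\varphi\Rightarrow\Delta$), $\mathsf{w_R}$ (from $\Gamma\Rightarrow$ infer $\Gamma\Rightarrow\varphi$) and $\mathsf{c}$ (from $\Gamma,\varphi,\varphi\Rightarrow\Delta$ infer $\Gamma,\varphi\Rightarrow\Delta$) are height-preserving admissible, and $\mathsf{cut}$ (from $\Gamma\Rightarrow\varphi$ and $\Gamma',\varphi\Rightarrow\Delta$ infer $\Gamma,\Gamma'\Rightarrow\Delta$) is admissible. Moreover, a sequent $\Gamma\Rightarrow\Delta$ is derivable in $\mathsf{S.ConstCKCEM}$ if and only if $\iota(\Gamma\Rightarrow\Delta)$ is derivable in $\mathsf{ConstCKCEM}$.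
   Context: Language $\mathcal{L}$: formulas $\varphi ::= p \mid \bot \mid \varphi\wedge\varphi \mid \varphi\vee\varphi \mid \varphi\to\varphi \mid \varphi \mathrel{\Box\!\!\to} \varphi \mid \varphi \mathrel{\Diamond\!\!\to}\varphi$; $\neg\varphi:=\varphi\to\bot$, $\top:=\neg\bot$, $\varphi\leftrightarrow\psi:=(\varphi\to\psi)\wedge(\psi\to\varphi)$. $\mathsf{ConstCK}$: any axiomatisation of intuitionistic propositional logic in $\mathcal{L}$ with modus ponens, plus CM$_\Box$: $(\varphi\mathrel{\Box\!\!\to}\psi\wedge\chi)\to(\varphi\mathrel{\Box\!\!\to}\psi)\wedge(\varphi\mathrel{\Box\!\!\to}\chi)$; CC$_\Box$: $(\varphi\mathrel{\Box\!\!\to}\psi)\wedge(\varphi\mathrel{\Box\!\!\to}\chi)\to(\varphi\mathrel{\Box\!\!\to}\psi\wedge\chi)$; CN$_\Box$: $\varphi\mathrel{\Box\!\!\to}\top$; CN$_\Diamond$: $\neg(\varphi\mathrel{\Diamond\!\!\to}\bot)$; CK$_\Diamond$: $(\varphi\mathrel{\Box\!\!\to}(\psi\to\chi))\to((\varphi\mathrel{\Diamond\!\!\to}\psi)\to(\varphi\mathrel{\Diamond\!\!\to}\chi))$; rules RA$_\Box$: from $\varphi\leftrightarrow\rho$ infer $(\varphi\mathrel{\Box\!\!\to}\psi)\leftrightarrow(\rho\mathrel{\Box\!\!\to}\psi)$; RC$_\Box$: from $\psi\leftrightarrow\chi$ infer $(\varphi\mathrel{\Box\!\!\to}\psi)\leftrightarrow(\varphi\mathrel{\Box\!\!\to}\chi)$;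 RA$_\Diamond$, RC$_\Diamond$: same with $\mathrel{\Diamond\!\!\to}$. $\mathsf{ConstCKCEM}$ = $\mathsf{ConstCK}$ + CEM$_\Diamond$: $(\varphi\mathrel{\Diamond\!\!\to}\psi)\wedge(\varphi\mathrel{\Diamond\!\!\to}\chi)\to(\varphi\mathrel{\Diamond\!\!\to}\psi\wedge\chi)$. A sequent $\Gamma\Rightarrow\Delta$ is a pair of finite multisets with $|\Delta|\le1$; $\varphi\Leftrightarrow\rho$ abbreviates $\varphi\Rightarrow\rho$ and $\rho\Rightarrow\varphi$. $\iota(\Gamma\Rightarrow\Delta)=\bigwedge\Gamma\to\bigvee\Delta$ if $\Gamma\neq\emptyset$, $\bigvee\Delta$ otherwise, $\bigvee\emptyset=\bot$. Rules of $\mathsf{S.ConstCKCEM}$ (premisses / conclusion, $0\le|\Delta|\le1$, $n,k\ge0$): init: $\Gamma,p\Rightarrow p$; $\bot_L$: $\Gamma,\bot\Rightarrow\Delta$; $\wedge_L$: $\Gamma,\varphi,\psi\Rightarrow\Delta$ / $\Gamma,\varphi\wedge\psi\Rightarrow\Delta$; $\wedge_R$: $\Gamma\Rightarrow\varphi$, $\Gamma\Rightarrow\psi$ / $\Gamma\Rightarrow\varphi\wedge\psi$; $\vee_L$: $\Gamma,\varphi\Rightarrow\Delta$, $\Gamma,\psi\Rightarrow\Delta$ / $\Gamma,\varphi\vee\psi\Rightarrow\Delta$; $\vee_R^1$: $\Gamma\Rightarrow\varphi$ / $\Gamma\Rightarrow\varphi\vee\psi$; $\vee_R^2$: $\Gamma\Rightarrow\psi$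 / $\Gamma\Rightarrow\varphi\vee\psi$; $\to_R$: $\Gamma,\varphi\Rightarrow\psi$ / $\Gamma\Rightarrow\varphi\to\psi$; $\to_L$: $\Gamma,\varphi\to\psi\Rightarrow\varphi$, $\Gamma,\psi\Rightarrow\Delta$ / $\Gamma,\varphi\to\psi\Rightarrow\Delta$; $\Box$: $\{\varphi\Leftrightarrow\rho_i\}_{i\le n}$, $\sigma_1,\dots,\sigma_n\Rightarrow\psi$ / $\Gamma,\rho_1\mathrel{\Box\!\!\to}\sigma_1,\dots,\rho_n\mathrel{\Box\!\!\to}\sigma_n\Rightarrow\varphi\mathrel{\Box\!\!\to}\psi$; $\Diamond^{cem}$: $\{\varphi\Leftrightarrow\rho_i\}_{i\le n}$, $\{\varphi\Leftrightarrow\xi_j\}_{j\le k}$, $\varphi\Leftrightarrow\eta$, $\sigma_1,\dots,\sigma_n,\chi_1,\dots,\chi_k,\psi\Rightarrow\vartheta$ / $\Gamma,\rho_1\mathrel{\Box\!\!\to}\sigma_1,\dots,\rho_n\mathrel{\Box\!\!\to}\sigma_n,\xi_1\mathrel{\Diamond\!\!\to}\chi_1,\dots,\xi_k\mathrel{\Diamond\!\!\to}\chi_k,\varphi\mathrel{\Diamond\!\!\to}\psi\Rightarrow\eta\mathrel{\Diamond\!\!\to}\vartheta$; $\Box\Diamond^{cem}$: $\{\varphi\Leftrightarrow\rho_i\}_{i\le n}$, $\{\varphi\Leftrightarrow\xi_j\}_{j\le k}$, $\sigma_1,\dots,\sigma_n,\chi_1,\dots,\chi_k,\psi\Rightarrow$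 / $\Gamma,\rho_1\mathrel{\Box\!\!\to}\sigma_1,\dots,\rho_n\mathrel{\Box\!\!\to}\sigma_n,\xi_1\mathrel{\Diamond\!\!\to}\chi_1,\dots,\xi_k\mathrel{\Diamond\!\!\to}\chi_k,\varphi\mathrel{\Diamond\!\!\to}\psi\Rightarrow\Delta$. Height of a derivation: length of its longest branch minus 1. A rule is admissible if its conclusion is derivable whenever its premisses are; height-preserving admissible if moreover the conclusion has a derivation of height at most the maximal height of the premisses' derivations. *)

theory Defs
  imports Main "HOL-Library.Multiset"
begin

datatype 'a fm =
    Atom 'a
  | Bot
  | And "'a fm" "'a fm"
  | Or "'a fm" "'a fm"
  | Imp "'a fm" "'a fm"
  | CBox "'a fm" "'a fm"
  | CDia "'a fm" "'a fm"

definition Neg :: "'a fm \<Rightarrow> 'a fm" where "Neg \<phi> = Imp \<phi> Bot"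
definition Top :: "'a fm" where "Top = Neg Bot"
definition Iff :: "'a fm \<Rightarrow> 'a fm \<Rightarrow> 'a fm" where
  "Iff \<phi> \<psi> = And (Imp \<phi> \<psi>) (Imp \<psi> \<phi>)"

inductive ConstCKCEM :: "'a fm \<Rightarrow> bool" where
  A1: "ConstCKCEM (Imp \<phi> (Imp \<psi> \<phi>))"
| A2: "ConstCKCEM (Imp (Imp \<phi> (Imp \<psi> \<chi>)) (Imp (Imp \<phi> \<psi>) (Imp \<phi> \<chi>)))"
| A3: "ConstCKCEM (Imp (And \<phi> \<psi>) \<phi>)"
| A4: "ConstCKCEM (Imp (And \<phi> \<psi>) \<psi>)"
| A5: "ConstCKCEM (Imp \<phi> (Imp \<psi> (And \<phi> \<psi>)))"
| A6: "ConstCKCEM (Imp \<phi> (Or \<phi> \<psi>))"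
| A7: "ConstCKCEM (Imp \<psi> (Or \<phi> \<psi>))"
| A8: "ConstCKCEM (Imp (Imp \<phi> \<chi>) (Imp (Imp \<psi> \<chi>) (Imp (Or \<phi> \<psi>) \<chi>)))"
| A9: "ConstCKCEM (Imp Bot \<phi>)"
| MP: "ConstCKCEM (Imp \<phi> \<psi>) \<Longrightarrow> ConstCKCEM \<phi> \<Longrightarrow> ConstCKCEM \<psi>"
| CM_Box: "ConstCKCEM (Imp (CBox \<phi> (And \<psi> \<chi>)) (And (CBox \<phi> \<psi>) (CBox \<phi> \<chi>)))"
| CC_Box: "ConstCKCEM (Imp (And (CBox \<phi> \<psi>) (CBox \<phi> \<chi>)) (CBox \<phi> (And \<psi> \<chi>)))"
| CN_Box: "ConstCKCEM (CBox \<phi> Top)"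
| CN_Dia: "ConstCKCEM (Neg (CDia \<phi> Bot))"
| CK_Dia: "ConstCKCEM (Imp (CBox \<phi> (Imp \<psi> \<chi>)) (Imp (CDia \<phi> \<psi>) (CDia \<phi> \<chi>)))"
| CEM_Dia: "ConstCKCEM (Imp (And (CDia \<phi> \<psi>) (CDia \<phi> \<chi>)) (CDia \<phi> (And \<psi> \<chi>)))"
| RA_Box: "ConstCKCEM (Iff \<phi> \<rho>) \<Longrightarrow> ConstCKCEM (Iff (CBox \<phi> \<psi>) (CBox \<rho> \<psi>))"
| RC_Box: "ConstCKCEM (Iff \<psi> \<chi>) \<Longrightarrow> ConstCKCEM (Iff (CBox \<phi> \<psi>) (CBox \<phi> \<chi>))"
| RA_Dia: "ConstCKCEM (Iff \<phi> \<rho>) \<Longrightarrow> ConstCKCEM (Iff (CDia \<phi> \<psi>) (CDia \<rho> \<psi>))"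
| RC_Dia: "ConstCKCEM (Iff \<psi> \<chi>) \<Longrightarrow> ConstCKCEM (Iff (CDia \<phi> \<psi>) (CDia \<phi> \<chi>))"

text \<open>A sequent is a pair (\<Gamma>, \<Delta>) with \<Gamma> a finite multiset and \<Delta> a multiset of size
  at most one, represented as an option (None = empty succedent).
  SD n G D means: \<Gamma> \<Rightarrow> \<Delta> has a derivation of height at most n.
  In the modal rules, the lists bs and ds enumerate the pairs (\<rho>_i,\<sigma>_i) and (\<xi>_j,\<chi>_j).\<close>

inductive SD :: "nat \<Rightarrow> 'a fm multiset \<Rightarrow> 'a fm option \<Rightarrow> bool" where
  init: "SD n (add_mset (Atom p) \<Gamma>) (Some (Atom p))"
| botL: "SD n (add_mset Bot \<Gamma>) \<Delta>"
| andL: "SD n (add_mset \<phi> (add_mset \<psi> \<Gamma>)) \<Delta> \<Longrightarrow> SD (Suc n) (add_mset (And \<phi> \<psi>) \<Gamma>) \<Delta>"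
| andR: "SD n \<Gamma> (Some \<phi>) \<Longrightarrow> SD n \<Gamma> (Some \<psi>) \<Longrightarrow> SD (Suc n) \<Gamma> (Some (And \<phi> \<psi>))"
| orL: "SD n (add_mset \<phi> \<Gamma>) \<Delta> \<Longrightarrow> SD n (add_mset \<psi> \<Gamma>) \<Delta> \<Longrightarrow>
        SD (Suc n) (add_mset (Or \<phi> \<psi>) \<Gamma>) \<Delta>"
| orR1: "SD n \<Gamma> (Some \<phi>) \<Longrightarrow> SD (Suc n) \<Gamma> (Some (Or \<phi> \<psi>))"
| orR2: "SD n \<Gamma> (Some \<psi>) \<Longrightarrow> SD (Suc n) \<Gamma> (Some (Or \<phi> \<psi>))"
| impR: "SD n (add_mset \<phi> \<Gamma>) (Some \<psi>) \<Longrightarrow> SD (Suc n) \<Gamma> (Some (Imp \<phi> \<psi>))"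
| impL: "SD n (add_mset (Imp \<phi> \<psi>) \<Gamma>) (Some \<phi>) \<Longrightarrow> SD n (add_mset \<psi> \<Gamma>) \<Delta> \<Longrightarrow>
         SD (Suc n) (add_mset (Imp \<phi> \<psi>) \<Gamma>) \<Delta>"
| box: "(\<forall>(\<rho>, \<sigma>) \<in> set bs. SD n {#\<phi>#} (Some \<rho>) \<and> SD n {#\<rho>#} (Some \<phi>)) \<Longrightarrow>
        SD n (mset (map snd bs)) (Some \<psi>) \<Longrightarrow>
        SD (Suc n) (\<Gamma> + mset (map (\<lambda>(\<rho>, \<sigma>). CBox \<rho> \<sigma>) bs)) (Some (CBox \<phi> \<psi>))"
| dia_cem: "(\<forall>(\<rho>, \<sigma>) \<in> set bs. SD n {#\<phi>#} (Some \<rho>) \<and> SD n {#\<rho>#} (Some \<phi>)) \<Longrightarrow>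
        (\<forall>(\<xi>, \<chi>) \<in> set ds. SD n {#\<phi>#} (Some \<xi>) \<and> SD n {#\<xi>#} (Some \<phi>)) \<Longrightarrow>
        SD n {#\<phi>#} (Some \<eta>) \<Longrightarrow> SD n {#\<eta>#} (Some \<phi>) \<Longrightarrow>
        SD n (add_mset \<psi> (mset (map snd bs) + mset (map snd ds))) (Some \<theta>) \<Longrightarrow>
        SD (Suc n) (add_mset (CDia \<phi> \<psi>) (\<Gamma> + mset (map (\<lambda>(\<rho>, \<sigma>). CBox \<rho> \<sigma>) bs)
                      + mset (map (\<lambda>(\<xi>, \<chi>). CDia \<xi> \<chi>) ds)))
                   (Some (CDia \<eta> \<theta>))"
| boxdia_cem: "(\<forall>(\<rho>, \<sigma>) \<in> set bs. SD n {#\<phi>#} (Some \<rho>) \<and> SD n {#\<rho>#} (Some \<phi>)) \<Longrightarrow>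
        (\<forall>(\<xi>, \<chi>) \<in> set ds. SD n {#\<phi>#} (Some \<xi>) \<and> SD n {#\<xi>#} (Some \<phi>)) \<Longrightarrow>
        SD n (add_mset \<psi> (mset (map snd bs) + mset (map snd ds))) None \<Longrightarrow>
        SD (Suc n) (add_mset (CDia \<phi> \<psi>) (\<Gamma> + mset (map (\<lambda>(\<rho>, \<sigma>). CBox \<rho> \<sigma>) bs)
                      + mset (map (\<lambda>(\<xi>, \<chi>). CDia \<xi> \<chi>) ds)))
                   \<Delta>"

definition SDerivable :: "'a fm multiset \<Rightarrow> 'a fm option \<Rightarrow> bool" where
  "SDerivable \<Gamma> \<Delta> \<longleftrightarrow> (\<exists>n. SD n \<Gamma> \<Delta>)"

fun big_and :: "'a fm list \<Rightarrow> 'a fm" where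
  "big_and [] = Top"
| "big_and [\<phi>] = \<phi>"
| "big_and (\<phi> # \<psi> # \<phi>s) = And \<phi> (big_and (\<psi> # \<phi>s))"

fun big_or :: "'a fm option \<Rightarrow> 'a fm" where
  "big_or None = Bot"
| "big_or (Some \<psi>) = \<psi>"

text \<open>iota applied to a list enumeration of the antecedent multiset.\<close>
definition iota :: "'a fm list \<Rightarrow> 'a fm option \<Rightarrow> 'a fm" where
  "iota \<Gamma>s \<Delta> = (if \<Gamma>s = [] then big_or \<Delta> else Imp (big_and \<Gamma>s) (big_or \<Delta>))"

end

theory Submission imports Defs begin

abbreviation bx :: "('a fm \<times> 'a fm) list \<Rightarrow> 'a fm multiset" where
  "bx bs \<equiv> mset (map (\<lambda>(\<rho>, \<sigma>). CBox \<rho> \<sigma>) bs)"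
abbreviation dx :: "('a fm \<times> 'a fm) list \<Rightarrow> 'a fm multiset" where
  "dx ds \<equiv> mset (map (\<lambda>(\<xi>, \<chi>). CDia \<xi> \<chi>) ds)"
abbreviation sn :: "('a fm \<times> 'a fm) list \<Rightarrow> 'a fm multiset" where
  "sn bs \<equiv> mset (map snd bs)"

definition EQ :: "nat \<Rightarrow> 'a fm \<Rightarrow> ('a fm \<times> 'a fm) list \<Rightarrow> bool" where
  "EQ n \<phi> bs \<longleftrightarrow> (\<forall>p \<in> set bs. SD n {#\<phi>#} (Some (fst p)) \<and> SD n {#fst p#} (Some \<phi>))"

definition tgt :: "nat \<Rightarrow> 'a fm \<Rightarrow> 'a fm option \<Rightarrow> 'a fm option \<Rightarrow> bool" where
  "tgt n \<phi> Dp D \<longleftrightarrow> Dp = None \<or> (\<exists>\<eta> \<theta>. Dp = Some \<theta> \<and> D = Some (CDia \<eta> \<theta>) \<and> SD n {#\<phi>#} (Some \<eta>) \<and> SD n {#\<eta>#} (Some \<phi>))"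

definition BRr :: "nat \<Rightarrow> 'a fm multiset \<Rightarrow> 'a fm option \<Rightarrow> bool" where
  "BRr n X D \<longleftrightarrow> (\<exists>\<phi> \<psi> bs. D = Some (CBox \<phi> \<psi>) \<and> bx bs \<subseteq># X \<and> EQ n \<phi> bs \<and> SD n (sn bs) (Some \<psi>))"

definition MRr :: "nat \<Rightarrow> 'a fm multiset \<Rightarrow> 'a fm option \<Rightarrow> bool" where
  "MRr n X D \<longleftrightarrow> (\<exists>\<phi> \<psi> bs ds Dp. add_mset (CDia \<phi> \<psi>) (bx bs + dx ds) \<subseteq># X \<and> EQ n \<phi> bs \<and> EQ n \<phi> ds
      \<and> SD n (add_mset \<psi> (sn bs + sn ds)) Dp \<and> tgt n \<phi> Dp D)"

lemma SD_box':
  assumes "bx bs \<subseteq># X" "EQ n \<phi> bs" "SD n (sn bs) (Some \<psi>)"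
  shows "SD (Suc n) X (Some (CBox \<phi> \<psi>))"
proof -
  have "X = (X - bx bs) + bx bs" using assms(1) by simp
  moreover have "SD (Suc n) ((X - bx bs) + bx bs) (Some (CBox \<phi> \<psi>))"
    by (rule SD.box) (use assms in \<open>auto simp: EQ_def case_prod_beta\<close>)
  ultimately show ?thesis by simp
qed

lemma SD_MR':
  assumes "add_mset (CDia \<phi> \<psi>) (bx bs + dx ds) \<subseteq># X" "EQ n \<phi> bs" "EQ n \<phi> ds"
    "SD n (add_mset \<psi> (sn bs + sn ds)) Dp" "tgt n \<phi> Dp D"
  shows "SD (Suc n) X D"
proof -
  let ?K = "add_mset (CDia \<phi> \<psi>) (bx bs + dx ds)"
  have X: "X = add_mset (CDia \<phi> \<psi>) ((X - ?K) + bx bs + dx ds)"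
  proof -
    have "X - ?K + ?K = X" using assms(1) by (rule subset_mset.diff_add)
    then show ?thesis by (simp add: ac_simps)
  qed
  show ?thesis
  proof (cases "Dp = None")
    case True
    have "SD (Suc n) (add_mset (CDia \<phi> \<psi>) ((X - ?K) + bx bs + dx ds)) D"
      by (rule SD.boxdia_cem) (use assms True in \<open>auto simp: EQ_def case_prod_beta\<close>)
    with X show ?thesis by simp
  next
    case False
    then obtain \<eta> \<theta> where e: "Dp = Some \<theta>" "D = Some (CDia \<eta> \<theta>)" "SD n {#\<phi>#} (Some \<eta>)" "SD n {#\<eta>#} (Some \<phi>)"
      using assms(5) by (auto simp: tgt_def)
    have "SD (Suc n) (add_mset (CDia \<phi> \<psi>) ((X - ?K) + bx bs + dx ds)) (Some (CDia \<eta> \<theta>))"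
      by (rule SD.dia_cem) (use assms e in \<open>auto simp: EQ_def case_prod_beta\<close>)
    with X e show ?thesis by simp
  qed
qed

lemma BRrI: "D = Some (CBox \<phi> \<psi>) \<Longrightarrow> bx bs \<subseteq># X \<Longrightarrow> EQ n \<phi> bs \<Longrightarrow> SD n (sn bs) (Some \<psi>) \<Longrightarrow> BRr n X D"
  unfolding BRr_def by blast

lemma MRrI: "add_mset (CDia \<phi> \<psi>) (bx bs + dx ds) \<subseteq># X \<Longrightarrow> EQ n \<phi> bs \<Longrightarrow> EQ n \<phi> ds
      \<Longrightarrow> SD n (add_mset \<psi> (sn bs + sn ds)) Dp \<Longrightarrow> tgt n \<phi> Dp D \<Longrightarrow> MRr n X D"
  unfolding MRr_def by blast

lemma BRr_SD: "BRr n X D \<Longrightarrow> SD (Suc n) X D"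
  unfolding BRr_def using SD_box' by blast

lemma MRr_SD: "MRr n X D \<Longrightarrow> SD (Suc n) X D"
  unfolding MRr_def using SD_MR' by blast

lemma SD_elim[consumes 1, case_names init botL andL andR orL orR1 orR2 impR impL box mr]:
  assumes "SD n X D"
  and "\<And>p \<Gamma>. X = add_mset (Atom p) \<Gamma> \<Longrightarrow> D = Some (Atom p) \<Longrightarrow> P"
  and "Bot \<in># X \<Longrightarrow> P"
  and "\<And>m A B \<Gamma>. n = Suc m \<Longrightarrow> X = add_mset (And A B) \<Gamma> \<Longrightarrow> SD m (add_mset A (add_mset B \<Gamma>)) D \<Longrightarrow> P"
  and "\<And>m A B. n = Suc m \<Longrightarrow> D = Some (And A B) \<Longrightarrow> SD m X (Some A) \<Longrightarrow> SD m X (Some B) \<Longrightarrow> P"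
  and "\<And>m A B \<Gamma>. n = Suc m \<Longrightarrow> X = add_mset (Or A B) \<Gamma> \<Longrightarrow> SD m (add_mset A \<Gamma>) D \<Longrightarrow> SD m (add_mset B \<Gamma>) D \<Longrightarrow> P"
  and "\<And>m A B. n = Suc m \<Longrightarrow> D = Some (Or A B) \<Longrightarrow> SD m X (Some A) \<Longrightarrow> P"
  and "\<And>m A B. n = Suc m \<Longrightarrow> D = Some (Or A B) \<Longrightarrow> SD m X (Some B) \<Longrightarrow> P"
  and "\<And>m A B. n = Suc m \<Longrightarrow> D = Some (Imp A B) \<Longrightarrow> SD m (add_mset A X) (Some B) \<Longrightarrow> P"
  and "\<And>m A B \<Gamma>. n = Suc m \<Longrightarrow> X = add_mset (Imp A B) \<Gamma> \<Longrightarrow> SD m (add_mset (Imp A B) \<Gamma>) (Some A) \<Longrightarrow> SD m (add_mset B \<Gamma>) D \<Longrightarrow> P"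
  and "\<And>m. n = Suc m \<Longrightarrow> BRr m X D \<Longrightarrow> P"
  and "\<And>m. n = Suc m \<Longrightarrow> MRr m X D \<Longrightarrow> P"
  shows P
  using assms(1)
proof (cases rule: SD.cases)
  case (box bs m \<phi> \<psi> \<Gamma>)
  show ?thesis
  proof (rule assms(11)[of m])
    show "n = Suc m" using box by simp
    show "BRr m X D" unfolding BRr_def
      apply (rule exI[of _ \<phi>], rule exI[of _ \<psi>], rule exI[of _ bs])
      using box by (auto simp: EQ_def case_prod_beta)
  qed
next
  case (dia_cem bs m \<phi> ds \<eta> \<psi> \<theta> \<Gamma>)
  show ?thesis
  proof (rule assms(12)[of m])
    show "n = Suc m" using dia_cem by simp
    show "MRr m X D" unfolding MRr_def
      apply (rule exI[of _ \<phi>], rule exI[of _ \<psi>], rule exI[of _ bs], rule exI[of _ ds], rule exI[of _ "Some \<theta>"])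
      using dia_cem by (auto simp: EQ_def tgt_def case_prod_beta)
  qed
next
  case (boxdia_cem bs m \<phi> ds \<psi> \<Gamma>)
  show ?thesis
  proof (rule assms(12)[of m])
    show "n = Suc m" using boxdia_cem by simp
    show "MRr m X D" unfolding MRr_def
      apply (rule exI[of _ \<phi>], rule exI[of _ \<psi>], rule exI[of _ bs], rule exI[of _ ds], rule exI[of _ None])
      using boxdia_cem by (auto simp: EQ_def tgt_def case_prod_beta)
  qed
next
  case init then show ?thesis using assms(2) by blast
next
  case botL then show ?thesis using assms(3) by simp
next
  case andL then show ?thesis using assms(4) by blast
next
  case andR then show ?thesis using assms(5) by blast
next
  case orL then show ?thesis using assms(6) by blast
next
  case orR1 then show ?thesis using assms(7) by blast
next
  case orR2 then show ?thesis using assms(8) by blast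
next
  case impR then show ?thesis using assms(9) by blast
next
  case impL then show ?thesis using assms(10) by blast
qed



lemma add_sub_split: "add_mset a G \<subseteq># Y \<Longrightarrow> Y = add_mset a (Y - {#a#}) \<and> G \<subseteq># Y - {#a#}"
  by (metis insert_DiffM insert_subset_eq_iff mset_subset_eq_insertD)

lemma SD_init': "Atom p \<in># X \<Longrightarrow> SD n X (Some (Atom p))"
  by (metis SD.init insert_DiffM)

lemma SD_botL': "Bot \<in># X \<Longrightarrow> SD n X D"
  by (metis SD.botL insert_DiffM)

lemma EQ_map: fixes \<phi> :: "'a fm" assumes "EQ n \<phi> bs" "\<And>Y (E::'a fm option). SD n Y E \<Longrightarrow> SD m Y E" shows "EQ m \<phi> bs"
  using assms unfolding EQ_def by blast

lemma tgt_map: fixes \<phi> :: "'a fm" assumes "tgt n \<phi> Dp D" "\<And>Y (E::'a fm option). SD n Y E \<Longrightarrow> SD m Y E" shows "tgt m \<phi> Dp D"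
proof -
  from assms(1) consider "Dp = None" | \<eta> \<theta> where "Dp = Some \<theta>" "D = Some (CDia \<eta> \<theta>)"
    "SD n {#\<phi>#} (Some \<eta>)" "SD n {#\<eta>#} (Some \<phi>)" unfolding tgt_def by blast
  then show ?thesis
  proof cases
    case 1 then show ?thesis by (simp add: tgt_def)
  next
    case 2 then show ?thesis unfolding tgt_def using assms(2) by blast
  qed
qed

lemma BRr_map: fixes X :: "'a fm multiset" assumes "BRr n X D" "\<And>Y (E::'a fm option). SD n Y E \<Longrightarrow> SD m Y E" "X \<subseteq># X'" shows "BRr m X' D"
proof -
  obtain \<phi> \<psi> bs where o: "D = Some (CBox \<phi> \<psi>)" "bx bs \<subseteq># X" "EQ n \<phi> bs" "SD n (sn bs) (Some \<psi>)"
    using assms(1) unfolding BRr_def by blast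
  have "EQ m \<phi> bs" by (rule EQ_map[OF o(3) assms(2)])
  moreover have "bx bs \<subseteq># X'" using o(2) assms(3) by (rule subset_mset.order_trans)
  moreover have "SD m (sn bs) (Some \<psi>)" by (rule assms(2)[OF o(4)])
  ultimately show ?thesis unfolding BRr_def using o(1) by blast
qed

lemma MRr_map: fixes X :: "'a fm multiset" assumes "MRr n X D" "\<And>Y (E::'a fm option). SD n Y E \<Longrightarrow> SD m Y E" "X \<subseteq># X'" shows "MRr m X' D"
proof -
  obtain \<phi> \<psi> bs ds Dp where o: "add_mset (CDia \<phi> \<psi>) (bx bs + dx ds) \<subseteq># X" "EQ n \<phi> bs" "EQ n \<phi> ds"
      "SD n (add_mset \<psi> (sn bs + sn ds)) Dp" "tgt n \<phi> Dp D"
    using assms(1) unfolding MRr_def by blast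
  have "EQ m \<phi> bs" by (rule EQ_map[OF o(2) assms(2)])
  moreover have "EQ m \<phi> ds" by (rule EQ_map[OF o(3) assms(2)])
  moreover have "tgt m \<phi> Dp D" by (rule tgt_map[OF o(5) assms(2)])
  moreover have "add_mset (CDia \<phi> \<psi>) (bx bs + dx ds) \<subseteq># X'" using o(1) assms(3) by (rule subset_mset.order_trans)
  moreover have "SD m (add_mset \<psi> (sn bs + sn ds)) Dp" by (rule assms(2)[OF o(4)])
  ultimately show ?thesis unfolding MRr_def by blast
qed

lemma SD_mono: "SD n X D \<Longrightarrow> n \<le> m \<Longrightarrow> SD m X D"
proof (induction n arbitrary: m X D)
  case 0
  from 0(1) show ?case
    by (cases rule: SD_elim) (auto intro: SD.intros SD_botL')
next
  case (Suc n)
  from Suc.prems(2) obtain m' where m': "m = Suc m'" "n \<le> m'" by (cases m) auto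
  have IH: "\<And>Y (E::'a fm option). SD n Y E \<Longrightarrow> SD m' Y E" using Suc.IH m' by blast
  from Suc.prems(1) show ?case
  proof (cases rule: SD_elim)
    case (init p \<Gamma>) then show ?thesis by (auto intro: SD.intros)
  next
    case botL then show ?thesis by (rule SD_botL')
  next
    case (box k) then show ?thesis using BRr_map[of n X D m' X] IH m'(1) BRr_SD by auto
  next
    case (mr k) then show ?thesis using MRr_map[of n X D m' X] IH m'(1) MRr_SD by auto
  qed (auto simp: m' intro: SD.intros IH)
qed

lemma SD_weak: "SD n X D \<Longrightarrow> X \<subseteq># Y \<Longrightarrow> SD n Y D"
proof (induction n arbitrary: X Y D)
  case 0
  from 0(1) show ?case
    by (cases rule: SD_elim) (use 0(2) in \<open>auto intro: SD_init' SD_botL' dest!: mset_subset_eqD[of _ Y]\<close>)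
next
  case (Suc n)
  note s = Suc.prems(2)
  have IH: "\<And>Y (E::'a fm option) Y'. SD n Y E \<Longrightarrow> Y \<subseteq># Y' \<Longrightarrow> SD n Y' E" using Suc.IH by blast
  from Suc.prems(1) show ?case
  proof (cases rule: SD_elim)
    case (init p \<Gamma>) then show ?thesis using s by (auto intro: SD_init' dest!: mset_subset_eqD[of _ Y])
  next
    case botL then show ?thesis using s by (auto intro: SD_botL' dest!: mset_subset_eqD[of _ Y])
  next
    case (andL m A B \<Gamma>)
    then obtain G where "Y = add_mset (And A B) G" "\<Gamma> \<subseteq># G" using add_sub_split s by metis
    then show ?thesis using andL IH[of "add_mset A (add_mset B \<Gamma>)" D "add_mset A (add_mset B G)"]
      by (auto intro: SD.andL)
  next
    case (andR m A B) then show ?thesis using IH s by (auto intro: SD.andR)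
  next
    case (orL m A B \<Gamma>)
    then obtain G where "Y = add_mset (Or A B) G" "\<Gamma> \<subseteq># G" using add_sub_split s by metis
    then show ?thesis using orL IH[of "add_mset A \<Gamma>" D "add_mset A G"] IH[of "add_mset B \<Gamma>" D "add_mset B G"]
      by (auto intro: SD.orL)
  next
    case (orR1 m A B) then show ?thesis using IH s by (auto intro: SD.orR1)
  next
    case (orR2 m A B) then show ?thesis using IH s by (auto intro: SD.orR2)
  next
    case (impR m A B) then show ?thesis using IH[of "add_mset A X" "Some B" "add_mset A Y"] s by (auto intro: SD.impR)
  next
    case (impL m A B \<Gamma>)
    then obtain G where "Y = add_mset (Imp A B) G" "\<Gamma> \<subseteq># G" using add_sub_split s by metis
    then show ?thesis using impL IH[of "add_mset (Imp A B) \<Gamma>" "Some A" "add_mset (Imp A B) G"] IH[of "add_mset B \<Gamma>" D "add_mset B G"]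
      by (auto intro: SD.impL)
  next
    case (box m) then show ?thesis using BRr_map[of m X D m Y] s BRr_SD by blast
  next
    case (mr m) then show ?thesis using MRr_map[of m X D m Y] s MRr_SD by blast
  qed
qed

lemma SD_weak_add: "SD n X D \<Longrightarrow> SD n (X + Y) D"
  using SD_weak by fastforce

lemma SD_wR: "SD n X None \<Longrightarrow> SD n X (Some \<phi>)"
proof (induction n arbitrary: X)
  case 0
  then show ?case by (auto elim!: SD_elim intro: SD_botL')
next
  case (Suc n)
  from Suc.prems show ?case
  proof (cases rule: SD_elim)
    case botL then show ?thesis by (rule SD_botL')
  next
    case (mr m)
    then obtain \<phi>' \<psi> bs ds Dp where "add_mset (CDia \<phi>' \<psi>) (bx bs + dx ds) \<subseteq># X" "EQ m \<phi>' bs" "EQ m \<phi>' ds"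
      "SD m (add_mset \<psi> (sn bs + sn ds)) Dp" "tgt m \<phi>' Dp None" unfolding MRr_def by blast
    then show ?thesis using SD_MR'[of \<phi>' \<psi> bs ds X m Dp "Some \<phi>"] mr by (auto simp: tgt_def)
  qed (auto intro: SD.intros Suc.IH simp: BRr_def)
qed


lemma common_height:
  fixes P :: "'x \<Rightarrow> nat \<Rightarrow> bool"
  assumes "\<forall>x\<in>set xs. \<exists>n. P x n" "\<And>x n m. P x n \<Longrightarrow> n \<le> m \<Longrightarrow> P x m"
  shows "\<exists>N. \<forall>x\<in>set xs. P x N"
  using assms(1)
proof (induction xs)
  case Nil then show ?case by simp
next
  case (Cons a xs)
  have "\<forall>x\<in>set xs. \<exists>n. P x n" using Cons.prems by simp
  then obtain N where N: "\<forall>x\<in>set xs. P x N" using Cons.IH by blast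
  obtain n where n: "P a n" using Cons.prems by auto
  have "\<forall>x\<in>set (a # xs). P x (max N n)"
  proof
    fix x assume "x \<in> set (a # xs)"
    then consider "x = a" | "x \<in> set xs" by auto
    then show "P x (max N n)"
    proof cases
      case 1 then show ?thesis using assms(2)[OF n, of "max N n"] by simp
    next
      case 2 then show ?thesis using assms(2)[of x N "max N n"] N by simp
    qed
  qed
  then show ?case by blast
qed

definition EQv :: "'a fm \<Rightarrow> ('a fm \<times> 'a fm) list \<Rightarrow> bool" where
  "EQv \<phi> bs \<longleftrightarrow> (\<forall>p \<in> set bs. SDerivable {#\<phi>#} (Some (fst p)) \<and> SDerivable {#fst p#} (Some \<phi>))"

definition tgtv :: "'a fm \<Rightarrow> 'a fm option \<Rightarrow> 'a fm option \<Rightarrow> bool" where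
  "tgtv \<phi> Dp D \<longleftrightarrow> Dp = None \<or> (\<exists>\<eta> \<theta>. Dp = Some \<theta> \<and> D = Some (CDia \<eta> \<theta>) \<and> SDerivable {#\<phi>#} (Some \<eta>) \<and> SDerivable {#\<eta>#} (Some \<phi>))"

lemma EQ_mono: "EQ n \<phi> bs \<Longrightarrow> n \<le> m \<Longrightarrow> EQ m \<phi> bs"
  using EQ_map SD_mono by blast

lemma EQv_EQ: assumes "EQv \<phi> bs" shows "\<exists>N. EQ N \<phi> bs"
proof -
  have "\<exists>N. \<forall>p\<in>set bs. SD N {#\<phi>#} (Some (fst p)) \<and> SD N {#fst p#} (Some \<phi>)"
  proof (rule common_height)
    show "\<forall>p\<in>set bs. \<exists>n. SD n {#\<phi>#} (Some (fst p)) \<and> SD n {#fst p#} (Some \<phi>)"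
    proof
      fix p assume "p \<in> set bs"
      then obtain n1 n2 where "SD n1 {#\<phi>#} (Some (fst p))" "SD n2 {#fst p#} (Some \<phi>)"
        using assms unfolding EQv_def SDerivable_def by blast
      then show "\<exists>n. SD n {#\<phi>#} (Some (fst p)) \<and> SD n {#fst p#} (Some \<phi>)"
        by (meson SD_mono max.cobounded1 max.cobounded2)
    qed
  qed (use SD_mono in blast)
  then show ?thesis unfolding EQ_def by blast
qed

lemma EQ_EQv: "EQ n \<phi> bs \<Longrightarrow> EQv \<phi> bs"
  unfolding EQ_def EQv_def SDerivable_def by blast

lemma Dv_mono2: assumes "SDerivable X D" "SDerivable Y E" shows "\<exists>n. SD n X D \<and> SD n Y E"
proof -
  obtain n1 n2 where "SD n1 X D" "SD n2 Y E" using assms unfolding SDerivable_def by blast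
  then have "SD (max n1 n2) X D" "SD (max n1 n2) Y E" by (auto elim: SD_mono)
  then show ?thesis by blast
qed

lemma Dv_box:
  assumes "bx bs \<subseteq># X" "EQv \<phi> bs" "SDerivable (sn bs) (Some \<psi>)"
  shows "SDerivable X (Some (CBox \<phi> \<psi>))"
proof -
  obtain N where N: "EQ N \<phi> bs" using EQv_EQ assms(2) by blast
  obtain n where n: "SD n (sn bs) (Some \<psi>)" using assms(3) unfolding SDerivable_def by blast
  have "SD (Suc (max N n)) X (Some (CBox \<phi> \<psi>))"
  proof (rule SD_box'[OF assms(1)])
    show "EQ (max N n) \<phi> bs" by (rule EQ_mono[OF N]) simp
    show "SD (max N n) (sn bs) (Some \<psi>)" by (rule SD_mono[OF n]) simp
  qed
  then show ?thesis unfolding SDerivable_def by blast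
qed

lemma Dv_MR:
  assumes "add_mset (CDia \<phi> \<psi>) (bx bs + dx ds) \<subseteq># X" "EQv \<phi> bs" "EQv \<phi> ds"
    "SDerivable (add_mset \<psi> (sn bs + sn ds)) Dp" "tgtv \<phi> Dp D"
  shows "SDerivable X D"
proof -
  obtain N1 where N1: "EQ N1 \<phi> bs" using EQv_EQ assms(2) by blast
  obtain N2 where N2: "EQ N2 \<phi> ds" using EQv_EQ assms(3) by blast
  obtain n where n: "SD n (add_mset \<psi> (sn bs + sn ds)) Dp" using assms(4) unfolding SDerivable_def by blast
  obtain N3 where N3: "tgt N3 \<phi> Dp D"
  proof (cases "Dp = None")
    case True then show ?thesis using that[of 0] by (simp add: tgt_def)
  next
    case False
    then obtain \<eta> \<theta> where e: "Dp = Some \<theta>" "D = Some (CDia \<eta> \<theta>)" "SDerivable {#\<phi>#} (Some \<eta>)" "SDerivable {#\<eta>#} (Some \<phi>)"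
      using assms(5) unfolding tgtv_def by blast
    then obtain k where "SD k {#\<phi>#} (Some \<eta>)" "SD k {#\<eta>#} (Some \<phi>)" using Dv_mono2 by blast
    then show ?thesis using that[of k] e by (auto simp: tgt_def)
  qed
  let ?N = "max (max N1 N2) (max n N3)"
  have "SD (Suc ?N) X D"
  proof (rule SD_MR'[OF assms(1)])
    show "EQ ?N \<phi> bs" by (rule EQ_mono[OF N1]) simp
    show "EQ ?N \<phi> ds" by (rule EQ_mono[OF N2]) simp
    show "SD ?N (add_mset \<psi> (sn bs + sn ds)) Dp" by (rule SD_mono[OF n]) simp
    show "tgt ?N \<phi> Dp D" by (rule tgt_map[OF N3]) (erule SD_mono, simp)
  qed
  then show ?thesis unfolding SDerivable_def by blast
qed

lemma Dv_weak: "SDerivable X D \<Longrightarrow> X \<subseteq># Y \<Longrightarrow> SDerivable Y D"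
  unfolding SDerivable_def by (metis SD_weak)

lemma Dv_init: "Atom p \<in># X \<Longrightarrow> SDerivable X (Some (Atom p))"
  unfolding SDerivable_def by (metis SD_init')

lemma Dv_botL: "Bot \<in># X \<Longrightarrow> SDerivable X D"
  unfolding SDerivable_def by (metis SD_botL')

lemma Dv_andL: "SDerivable (add_mset A (add_mset B G)) D \<Longrightarrow> SDerivable (add_mset (And A B) G) D"
  unfolding SDerivable_def using SD.andL[of _ A B G D] by blast

lemma Dv_andR: assumes "SDerivable X (Some A)" "SDerivable X (Some B)" shows "SDerivable X (Some (And A B))"
proof -
  obtain n where "SD n X (Some A)" "SD n X (Some B)" using Dv_mono2[OF assms] by blast
  then have "SD (Suc n) X (Some (And A B))" by (rule SD.andR)
  then show ?thesis unfolding SDerivable_def by blast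
qed

lemma Dv_orL: assumes "SDerivable (add_mset A G) D" "SDerivable (add_mset B G) D" shows "SDerivable (add_mset (Or A B) G) D"
proof -
  obtain n where "SD n (add_mset A G) D" "SD n (add_mset B G) D" using Dv_mono2[OF assms] by blast
  then have "SD (Suc n) (add_mset (Or A B) G) D" by (rule SD.orL)
  then show ?thesis unfolding SDerivable_def by blast
qed

lemma Dv_orR1: "SDerivable X (Some A) \<Longrightarrow> SDerivable X (Some (Or A B))"
  unfolding SDerivable_def using SD.orR1[of _ X A B] by blast

lemma Dv_orR2: "SDerivable X (Some B) \<Longrightarrow> SDerivable X (Some (Or A B))"
  unfolding SDerivable_def using SD.orR2[of _ X B A] by blast

lemma Dv_impR: "SDerivable (add_mset A X) (Some B) \<Longrightarrow> SDerivable X (Some (Imp A B))"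
  unfolding SDerivable_def using SD.impR[of _ A X B] by blast

lemma Dv_impL: assumes "SDerivable (add_mset (Imp A B) G) (Some A)" "SDerivable (add_mset B G) D" shows "SDerivable (add_mset (Imp A B) G) D"
proof -
  obtain n where "SD n (add_mset (Imp A B) G) (Some A)" "SD n (add_mset B G) D" using Dv_mono2[OF assms] by blast
  then have "SD (Suc n) (add_mset (Imp A B) G) D" by (rule SD.impL)
  then show ?thesis unfolding SDerivable_def by blast
qed

lemma Dv_wR: "SDerivable X None \<Longrightarrow> SDerivable X (Some A)"
  unfolding SDerivable_def by (metis SD_wR)

lemma Dv_id: "SDerivable (add_mset A X) (Some A)"
proof (induction A arbitrary: X)
  case (Atom p) then show ?case by (simp add: Dv_init)
next
  case Bot then show ?case by (simp add: Dv_botL)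
next
  case (And A B)
  have "SDerivable (add_mset A (add_mset B X)) (Some A)" using And.IH(1) by blast
  moreover have "SDerivable (add_mset A (add_mset B X)) (Some B)"
    using And.IH(2)[of "add_mset A X"] by (simp add: add_mset_commute)
  ultimately have "SDerivable (add_mset A (add_mset B X)) (Some (And A B))" by (rule Dv_andR)
  then show ?case by (rule Dv_andL)
next
  case (Or A B)
  show ?case
  proof (rule Dv_orL)
    show "SDerivable (add_mset A X) (Some (Or A B))" by (rule Dv_orR1) (rule Or.IH(1))
    show "SDerivable (add_mset B X) (Some (Or A B))" by (rule Dv_orR2) (rule Or.IH(2))
  qed
next
  case (Imp A B)
  have "SDerivable (add_mset (Imp A B) (add_mset A X)) (Some A)" using Imp.IH(1)[of "add_mset (Imp A B) X"] by (simp add: add_mset_commute)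
  moreover have "SDerivable (add_mset B (add_mset A X)) (Some B)" using Imp.IH(2) by blast
  ultimately have "SDerivable (add_mset (Imp A B) (add_mset A X)) (Some B)" by (rule Dv_impL)
  then have "SDerivable (add_mset A (add_mset (Imp A B) X)) (Some B)" by (simp add: add_mset_commute)
  then show ?case by (rule Dv_impR)
next
  case (CBox A B)
  show ?case
  proof (rule Dv_box[of "[(A, B)]"])
    show "bx [(A, B)] \<subseteq># add_mset (CBox A B) X" by simp
    show "EQv A [(A, B)]" unfolding EQv_def using CBox.IH(1)[of "{#}"] by simp
    show "SDerivable (sn [(A, B)]) (Some B)" using CBox.IH(2)[of "{#}"] by simp
  qed
next
  case (CDia A B)
  show ?case
  proof (rule Dv_MR[of A B "[]" "[]" _ "Some B"])
    show "add_mset (CDia A B) (bx [] + dx []) \<subseteq># add_mset (CDia A B) X" by simp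
    show "EQv A []" "EQv A []" unfolding EQv_def by simp_all
    show "SDerivable (add_mset B (sn [] + sn [])) (Some B)" using CDia.IH(2)[of "{#}"] by simp
    show "tgtv A (Some B) (Some (CDia A B))" unfolding tgtv_def using CDia.IH(1)[of "{#}"] by simp
  qed
qed


section \<open>Invertibility\<close>

lemma sub_notin: "K \<subseteq># add_mset F G \<Longrightarrow> F \<notin># K \<Longrightarrow> K \<subseteq># G"
  by (metis diff_single_trivial subset_eq_diff_conv union_mset_add_mset_right add_mset_add_single)

lemma in_bx: "F \<in># bx bs \<Longrightarrow> \<exists>a b. F = CBox a b"
  by auto

lemma in_dx: "F \<in># dx bs \<Longrightarrow> \<exists>a b. F = CDia a b"
  by auto

lemma BRr_drop: assumes "BRr m (add_mset F G) D" "\<And>a b. F \<noteq> CBox a b" shows "BRr m G D"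
proof -
  obtain \<phi> \<psi> bs where o: "D = Some (CBox \<phi> \<psi>)" "bx bs \<subseteq># add_mset F G" "EQ m \<phi> bs" "SD m (sn bs) (Some \<psi>)"
    using assms(1) unfolding BRr_def by blast
  have "F \<notin># bx bs"
  proof
    assume "F \<in># bx bs" then obtain a b where "F = CBox a b" using in_bx by blast
    with assms(2) show False by blast
  qed
  then have "bx bs \<subseteq># G" by (rule sub_notin[OF o(2)])
  then show ?thesis using o unfolding BRr_def by (intro exI[of _ \<phi>] exI[of _ \<psi>] exI[of _ bs]) simp
qed

lemma MRr_drop: assumes "MRr m (add_mset F G) D" "\<And>a b. F \<noteq> CBox a b" "\<And>a b. F \<noteq> CDia a b" shows "MRr m G D"
proof -
  obtain \<phi> \<psi> bs ds Dp where o: "add_mset (CDia \<phi> \<psi>) (bx bs + dx ds) \<subseteq># add_mset F G" "EQ m \<phi> bs" "EQ m \<phi> ds"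
      "SD m (add_mset \<psi> (sn bs + sn ds)) Dp" "tgt m \<phi> Dp D"
    using assms(1) unfolding MRr_def by blast
  have "F \<notin># add_mset (CDia \<phi> \<psi>) (bx bs + dx ds)"
  proof
    assume "F \<in># add_mset (CDia \<phi> \<psi>) (bx bs + dx ds)"
    then consider "F = CDia \<phi> \<psi>" | "F \<in># bx bs" | "F \<in># dx ds" by auto
    then show False
    proof cases
      case 1 then show False using assms(3) by blast
    next
      case 2 then obtain a b where "F = CBox a b" using in_bx by blast
      with assms(2) show False by blast
    next
      case 3 then obtain a b where "F = CDia a b" using in_dx by blast
      with assms(3) show False by blast
    qed
  qed
  then have "add_mset (CDia \<phi> \<psi>) (bx bs + dx ds) \<subseteq># G" by (rule sub_notin[OF o(1)])
  then show ?thesis using o unfolding MRr_def by (intro exI[of _ \<phi>] exI[of _ \<psi>] exI[of _ bs] exI[of _ ds] exI[of _ Dp]) simp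
qed

lemma BRr_SD_sub: "BRr m G D \<Longrightarrow> G \<subseteq># Y \<Longrightarrow> SD (Suc m) Y D"
  using BRr_map[of m G D m Y] BRr_SD by blast

lemma MRr_SD_sub: "MRr m G D \<Longrightarrow> G \<subseteq># Y \<Longrightarrow> SD (Suc m) Y D"
  using MRr_map[of m G D m Y] MRr_SD by blast

lemma add_split: "add_mset F G = add_mset F' \<Gamma> \<Longrightarrow> (F = F' \<and> G = \<Gamma>) \<or> (\<exists>K. G = add_mset F' K \<and> \<Gamma> = add_mset F K)"
  by (auto simp: add_eq_conv_ex)

lemma inv_andL: "SD n (add_mset (And A B) G) D \<Longrightarrow> SD n (add_mset A (add_mset B (G))) D"
proof (induction n arbitrary: G D rule: less_induct)
  case (less n)
  have IH: "\<And>m G' (D'::'a fm option). m < n \<Longrightarrow> SD m (add_mset (And A B) G') D' \<Longrightarrow> SD m (add_mset A (add_mset B (G'))) D'"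
    using less.IH by blast
  from less.prems show ?case
  proof (cases rule: SD_elim)
    case (init p \<Gamma>)
    then have "Atom p \<in># G" by (intro insert_noteq_member[OF init(1)]) simp
    then show ?thesis using init by (auto intro: SD_init')
  next
    case botL then have "Bot \<in># G" by auto
    then show ?thesis by (auto intro: SD_botL')
  next
    case (andL m A' B' \<Gamma>)
    from add_split[OF andL(2)] show ?thesis
    proof (elim disjE exE conjE)
      fix K assume K: "G = add_mset (And A' B') K" "\<Gamma> = add_mset (And A B) K"
      have "SD m (add_mset (And A B) (add_mset A' (add_mset B' K))) D" using andL(3) K by (simp add: add_mset_commute)
      then have "SD m (add_mset A (add_mset B (add_mset A' (add_mset B' K)))) D" using IH andL(1) by simp
      then have "SD (Suc m) (add_mset (And A' B') (add_mset A (add_mset B (K)))) D"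
        by (intro SD.andL) (simp add: add_mset_commute)
      then show ?thesis using andL(1) K by (simp add: add_mset_commute)
    next
      assume a: "And A B = And A' B'" "G = \<Gamma>"
      then show ?thesis using andL(3) SD_mono[of m _ D n] andL(1) by auto
    qed
  next
    case (andR m A' B') then show ?thesis using IH by (auto intro: SD.andR)
  next
    case (orL m A' B' \<Gamma>)
    from add_split[OF orL(2)] show ?thesis
    proof (elim disjE exE conjE)
      fix K assume K: "G = add_mset (Or A' B') K" "\<Gamma> = add_mset (And A B) K"
      have "SD m (add_mset (And A B) (add_mset A' K)) D" "SD m (add_mset (And A B) (add_mset B' K)) D"
        using orL(3,4) K by (simp_all add: add_mset_commute)
      then have "SD m (add_mset A (add_mset B (add_mset A' K))) D" "SD m (add_mset A (add_mset B (add_mset B' K))) D"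
        using IH orL(1) by simp_all
      then have "SD (Suc m) (add_mset (Or A' B') (add_mset A (add_mset B (K)))) D"
        by (intro SD.orL) (simp_all add: add_mset_commute)
      then show ?thesis using orL(1) K by (simp add: add_mset_commute)
    next
      assume a: "And A B = Or A' B'" "G = \<Gamma>"
      then show ?thesis by simp
    qed
  next
    case (orR1 m A' B') then show ?thesis using IH by (auto intro: SD.orR1)
  next
    case (orR2 m A' B') then show ?thesis using IH by (auto intro: SD.orR2)
  next
    case (impR m A' B')
    have "SD m (add_mset (And A B) (add_mset A' G)) (Some B')" using impR by (simp add: add_mset_commute)
    then have "SD m (add_mset A (add_mset B (add_mset A' G))) (Some B')" using IH impR(1) by simp
    then have "SD m (add_mset A' (add_mset A (add_mset B (G)))) (Some B')" by (simp add: add_mset_commute)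
    then show ?thesis using impR by (auto intro: SD.impR)
  next
    case (impL m A' B' \<Gamma>)
    from add_split[OF impL(2)] show ?thesis
    proof (elim disjE exE conjE)
      fix K assume K: "G = add_mset (Imp A' B') K" "\<Gamma> = add_mset (And A B) K"
      have "SD m (add_mset (And A B) (add_mset (Imp A' B') K)) (Some A')" "SD m (add_mset (And A B) (add_mset B' K)) D"
        using impL(3,4) K by (simp_all add: add_mset_commute)
      then have "SD m (add_mset A (add_mset B (add_mset (Imp A' B') K))) (Some A')" "SD m (add_mset A (add_mset B (add_mset B' K))) D"
        using IH impL(1) by simp_all
      then have "SD (Suc m) (add_mset (Imp A' B') (add_mset A (add_mset B (K)))) D"
        by (intro SD.impL) (simp_all add: add_mset_commute)
      then show ?thesis using impL(1) K by (simp add: add_mset_commute)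
    next
      assume a: "And A B = Imp A' B'" "G = \<Gamma>"
      then show ?thesis by simp
    qed
  next
    case (box m)
    then have "BRr m G D" using BRr_drop by blast
    then show ?thesis using box BRr_SD_sub by fastforce
  next
    case (mr m)
    then have "MRr m G D" using MRr_drop by blast
    then show ?thesis using mr MRr_SD_sub by fastforce
  qed
qed

lemma inv_orL1: "SD n (add_mset (Or A B) G) D \<Longrightarrow> SD n (add_mset A (G)) D"
proof (induction n arbitrary: G D rule: less_induct)
  case (less n)
  have IH: "\<And>m G' (D'::'a fm option). m < n \<Longrightarrow> SD m (add_mset (Or A B) G') D' \<Longrightarrow> SD m (add_mset A (G')) D'"
    using less.IH by blast
  from less.prems show ?case
  proof (cases rule: SD_elim)
    case (init p \<Gamma>)
    then have "Atom p \<in># G" by (intro insert_noteq_member[OF init(1)]) simp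
    then show ?thesis using init by (auto intro: SD_init')
  next
    case botL then have "Bot \<in># G" by auto
    then show ?thesis by (auto intro: SD_botL')
  next
    case (andL m A' B' \<Gamma>)
    from add_split[OF andL(2)] show ?thesis
    proof (elim disjE exE conjE)
      fix K assume K: "G = add_mset (And A' B') K" "\<Gamma> = add_mset (Or A B) K"
      have "SD m (add_mset (Or A B) (add_mset A' (add_mset B' K))) D" using andL(3) K by (simp add: add_mset_commute)
      then have "SD m (add_mset A (add_mset A' (add_mset B' K))) D" using IH andL(1) by simp
      then have "SD (Suc m) (add_mset (And A' B') (add_mset A (K))) D"
        by (intro SD.andL) (simp add: add_mset_commute)
      then show ?thesis using andL(1) K by (simp add: add_mset_commute)
    next
      assume a: "Or A B = And A' B'" "G = \<Gamma>"
      then show ?thesis by simp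
    qed
  next
    case (andR m A' B') then show ?thesis using IH by (auto intro: SD.andR)
  next
    case (orL m A' B' \<Gamma>)
    from add_split[OF orL(2)] show ?thesis
    proof (elim disjE exE conjE)
      fix K assume K: "G = add_mset (Or A' B') K" "\<Gamma> = add_mset (Or A B) K"
      have "SD m (add_mset (Or A B) (add_mset A' K)) D" "SD m (add_mset (Or A B) (add_mset B' K)) D"
        using orL(3,4) K by (simp_all add: add_mset_commute)
      then have "SD m (add_mset A (add_mset A' K)) D" "SD m (add_mset A (add_mset B' K)) D"
        using IH orL(1) by simp_all
      then have "SD (Suc m) (add_mset (Or A' B') (add_mset A (K))) D"
        by (intro SD.orL) (simp_all add: add_mset_commute)
      then show ?thesis using orL(1) K by (simp add: add_mset_commute)
    next
      assume a: "Or A B = Or A' B'" "G = \<Gamma>"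
      then show ?thesis using orL(3) SD_mono[of m _ D n] orL(1) by auto
    qed
  next
    case (orR1 m A' B') then show ?thesis using IH by (auto intro: SD.orR1)
  next
    case (orR2 m A' B') then show ?thesis using IH by (auto intro: SD.orR2)
  next
    case (impR m A' B')
    have "SD m (add_mset (Or A B) (add_mset A' G)) (Some B')" using impR by (simp add: add_mset_commute)
    then have "SD m (add_mset A (add_mset A' G)) (Some B')" using IH impR(1) by simp
    then have "SD m (add_mset A' (add_mset A (G))) (Some B')" by (simp add: add_mset_commute)
    then show ?thesis using impR by (auto intro: SD.impR)
  next
    case (impL m A' B' \<Gamma>)
    from add_split[OF impL(2)] show ?thesis
    proof (elim disjE exE conjE)
      fix K assume K: "G = add_mset (Imp A' B') K" "\<Gamma> = add_mset (Or A B) K"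
      have "SD m (add_mset (Or A B) (add_mset (Imp A' B') K)) (Some A')" "SD m (add_mset (Or A B) (add_mset B' K)) D"
        using impL(3,4) K by (simp_all add: add_mset_commute)
      then have "SD m (add_mset A (add_mset (Imp A' B') K)) (Some A')" "SD m (add_mset A (add_mset B' K)) D"
        using IH impL(1) by simp_all
      then have "SD (Suc m) (add_mset (Imp A' B') (add_mset A (K))) D"
        by (intro SD.impL) (simp_all add: add_mset_commute)
      then show ?thesis using impL(1) K by (simp add: add_mset_commute)
    next
      assume a: "Or A B = Imp A' B'" "G = \<Gamma>"
      then show ?thesis by simp
    qed
  next
    case (box m)
    then have "BRr m G D" using BRr_drop by blast
    then show ?thesis using box BRr_SD_sub by fastforce
  next
    case (mr m)
    then have "MRr m G D" using MRr_drop by blast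
    then show ?thesis using mr MRr_SD_sub by fastforce
  qed
qed

lemma inv_orL2: "SD n (add_mset (Or A B) G) D \<Longrightarrow> SD n (add_mset B (G)) D"
proof (induction n arbitrary: G D rule: less_induct)
  case (less n)
  have IH: "\<And>m G' (D'::'a fm option). m < n \<Longrightarrow> SD m (add_mset (Or A B) G') D' \<Longrightarrow> SD m (add_mset B (G')) D'"
    using less.IH by blast
  from less.prems show ?case
  proof (cases rule: SD_elim)
    case (init p \<Gamma>)
    then have "Atom p \<in># G" by (intro insert_noteq_member[OF init(1)]) simp
    then show ?thesis using init by (auto intro: SD_init')
  next
    case botL then have "Bot \<in># G" by auto
    then show ?thesis by (auto intro: SD_botL')
  next
    case (andL m A' B' \<Gamma>)
    from add_split[OF andL(2)] show ?thesis
    proof (elim disjE exE conjE)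
      fix K assume K: "G = add_mset (And A' B') K" "\<Gamma> = add_mset (Or A B) K"
      have "SD m (add_mset (Or A B) (add_mset A' (add_mset B' K))) D" using andL(3) K by (simp add: add_mset_commute)
      then have "SD m (add_mset B (add_mset A' (add_mset B' K))) D" using IH andL(1) by simp
      then have "SD (Suc m) (add_mset (And A' B') (add_mset B (K))) D"
        by (intro SD.andL) (simp add: add_mset_commute)
      then show ?thesis using andL(1) K by (simp add: add_mset_commute)
    next
      assume a: "Or A B = And A' B'" "G = \<Gamma>"
      then show ?thesis by simp
    qed
  next
    case (andR m A' B') then show ?thesis using IH by (auto intro: SD.andR)
  next
    case (orL m A' B' \<Gamma>)
    from add_split[OF orL(2)] show ?thesis
    proof (elim disjE exE conjE)
      fix K assume K: "G = add_mset (Or A' B') K" "\<Gamma> = add_mset (Or A B) K"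
      have "SD m (add_mset (Or A B) (add_mset A' K)) D" "SD m (add_mset (Or A B) (add_mset B' K)) D"
        using orL(3,4) K by (simp_all add: add_mset_commute)
      then have "SD m (add_mset B (add_mset A' K)) D" "SD m (add_mset B (add_mset B' K)) D"
        using IH orL(1) by simp_all
      then have "SD (Suc m) (add_mset (Or A' B') (add_mset B (K))) D"
        by (intro SD.orL) (simp_all add: add_mset_commute)
      then show ?thesis using orL(1) K by (simp add: add_mset_commute)
    next
      assume a: "Or A B = Or A' B'" "G = \<Gamma>"
      then show ?thesis using orL(4) SD_mono[of m _ D n] orL(1) by auto
    qed
  next
    case (orR1 m A' B') then show ?thesis using IH by (auto intro: SD.orR1)
  next
    case (orR2 m A' B') then show ?thesis using IH by (auto intro: SD.orR2)
  next
    case (impR m A' B')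
    have "SD m (add_mset (Or A B) (add_mset A' G)) (Some B')" using impR by (simp add: add_mset_commute)
    then have "SD m (add_mset B (add_mset A' G)) (Some B')" using IH impR(1) by simp
    then have "SD m (add_mset A' (add_mset B (G))) (Some B')" by (simp add: add_mset_commute)
    then show ?thesis using impR by (auto intro: SD.impR)
  next
    case (impL m A' B' \<Gamma>)
    from add_split[OF impL(2)] show ?thesis
    proof (elim disjE exE conjE)
      fix K assume K: "G = add_mset (Imp A' B') K" "\<Gamma> = add_mset (Or A B) K"
      have "SD m (add_mset (Or A B) (add_mset (Imp A' B') K)) (Some A')" "SD m (add_mset (Or A B) (add_mset B' K)) D"
        using impL(3,4) K by (simp_all add: add_mset_commute)
      then have "SD m (add_mset B (add_mset (Imp A' B') K)) (Some A')" "SD m (add_mset B (add_mset B' K)) D"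
        using IH impL(1) by simp_all
      then have "SD (Suc m) (add_mset (Imp A' B') (add_mset B (K))) D"
        by (intro SD.impL) (simp_all add: add_mset_commute)
      then show ?thesis using impL(1) K by (simp add: add_mset_commute)
    next
      assume a: "Or A B = Imp A' B'" "G = \<Gamma>"
      then show ?thesis by simp
    qed
  next
    case (box m)
    then have "BRr m G D" using BRr_drop by blast
    then show ?thesis using box BRr_SD_sub by fastforce
  next
    case (mr m)
    then have "MRr m G D" using MRr_drop by blast
    then show ?thesis using mr MRr_SD_sub by fastforce
  qed
qed

lemma inv_impL: "SD n (add_mset (Imp A B) G) D \<Longrightarrow> SD n (add_mset B (G)) D"
proof (induction n arbitrary: G D rule: less_induct)
  case (less n)
  have IH: "\<And>m G' (D'::'a fm option). m < n \<Longrightarrow> SD m (add_mset (Imp A B) G') D' \<Longrightarrow> SD m (add_mset B (G')) D'"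
    using less.IH by blast
  from less.prems show ?case
  proof (cases rule: SD_elim)
    case (init p \<Gamma>)
    then have "Atom p \<in># G" by (intro insert_noteq_member[OF init(1)]) simp
    then show ?thesis using init by (auto intro: SD_init')
  next
    case botL then have "Bot \<in># G" by auto
    then show ?thesis by (auto intro: SD_botL')
  next
    case (andL m A' B' \<Gamma>)
    from add_split[OF andL(2)] show ?thesis
    proof (elim disjE exE conjE)
      fix K assume K: "G = add_mset (And A' B') K" "\<Gamma> = add_mset (Imp A B) K"
      have "SD m (add_mset (Imp A B) (add_mset A' (add_mset B' K))) D" using andL(3) K by (simp add: add_mset_commute)
      then have "SD m (add_mset B (add_mset A' (add_mset B' K))) D" using IH andL(1) by simp
      then have "SD (Suc m) (add_mset (And A' B') (add_mset B (K))) D"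
        by (intro SD.andL) (simp add: add_mset_commute)
      then show ?thesis using andL(1) K by (simp add: add_mset_commute)
    next
      assume a: "Imp A B = And A' B'" "G = \<Gamma>"
      then show ?thesis by simp
    qed
  next
    case (andR m A' B') then show ?thesis using IH by (auto intro: SD.andR)
  next
    case (orL m A' B' \<Gamma>)
    from add_split[OF orL(2)] show ?thesis
    proof (elim disjE exE conjE)
      fix K assume K: "G = add_mset (Or A' B') K" "\<Gamma> = add_mset (Imp A B) K"
      have "SD m (add_mset (Imp A B) (add_mset A' K)) D" "SD m (add_mset (Imp A B) (add_mset B' K)) D"
        using orL(3,4) K by (simp_all add: add_mset_commute)
      then have "SD m (add_mset B (add_mset A' K)) D" "SD m (add_mset B (add_mset B' K)) D"
        using IH orL(1) by simp_all
      then have "SD (Suc m) (add_mset (Or A' B') (add_mset B (K))) D"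
        by (intro SD.orL) (simp_all add: add_mset_commute)
      then show ?thesis using orL(1) K by (simp add: add_mset_commute)
    next
      assume a: "Imp A B = Or A' B'" "G = \<Gamma>"
      then show ?thesis by simp
    qed
  next
    case (orR1 m A' B') then show ?thesis using IH by (auto intro: SD.orR1)
  next
    case (orR2 m A' B') then show ?thesis using IH by (auto intro: SD.orR2)
  next
    case (impR m A' B')
    have "SD m (add_mset (Imp A B) (add_mset A' G)) (Some B')" using impR by (simp add: add_mset_commute)
    then have "SD m (add_mset B (add_mset A' G)) (Some B')" using IH impR(1) by simp
    then have "SD m (add_mset A' (add_mset B (G))) (Some B')" by (simp add: add_mset_commute)
    then show ?thesis using impR by (auto intro: SD.impR)
  next
    case (impL m A' B' \<Gamma>)
    from add_split[OF impL(2)] show ?thesis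
    proof (elim disjE exE conjE)
      fix K assume K: "G = add_mset (Imp A' B') K" "\<Gamma> = add_mset (Imp A B) K"
      have "SD m (add_mset (Imp A B) (add_mset (Imp A' B') K)) (Some A')" "SD m (add_mset (Imp A B) (add_mset B' K)) D"
        using impL(3,4) K by (simp_all add: add_mset_commute)
      then have "SD m (add_mset B (add_mset (Imp A' B') K)) (Some A')" "SD m (add_mset B (add_mset B' K)) D"
        using IH impL(1) by simp_all
      then have "SD (Suc m) (add_mset (Imp A' B') (add_mset B (K))) D"
        by (intro SD.impL) (simp_all add: add_mset_commute)
      then show ?thesis using impL(1) K by (simp add: add_mset_commute)
    next
      assume a: "Imp A B = Imp A' B'" "G = \<Gamma>"
      then show ?thesis using impL(4) SD_mono[of m _ D n] impL(1) by auto
    qed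
  next
    case (box m)
    then have "BRr m G D" using BRr_drop by blast
    then show ?thesis using box BRr_SD_sub by fastforce
  next
    case (mr m)
    then have "MRr m G D" using MRr_drop by blast
    then show ?thesis using mr MRr_SD_sub by fastforce
  qed
qed



section \<open>Contraction\<close>

lemma count_bx: "count (bx bs) (CBox a b) = count (mset bs) (a, b)"
  by (induction bs) auto

lemma count_bx_dia: "count (bx bs) (CDia a b) = 0"
  by (induction bs) auto

lemma count_dx: "count (dx ds) (CDia a b) = count (mset ds) (a, b)"
  by (induction ds) auto

lemma count_dx_box: "count (dx ds) (CBox a b) = 0"
  by (induction ds) auto

lemma not_sub_count:
  assumes "K \<subseteq># add_mset \<phi> (add_mset \<phi> X)" "\<not> K \<subseteq># add_mset \<phi> X"
  shows "2 \<le> count K \<phi>"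
proof (rule ccontr)
  assume c: "\<not> 2 \<le> count K \<phi>"
  have "count K x \<le> count (add_mset \<phi> X) x" for x
  proof (cases "x = \<phi>")
    case True then show ?thesis using c by simp
  next
    case False then show ?thesis using assms(1) by (metis count_add_mset mset_subset_eq_count)
  qed
  then have "K \<subseteq># add_mset \<phi> X" by (simp add: subseteq_mset_def)
  then show False using assms(2) by simp
qed

lemma rem_dup:
  assumes "2 \<le> count (mset xs) p"
  shows "\<exists>xs'. set xs' \<subseteq> set xs \<and> mset xs = add_mset p (mset xs') \<and> p \<in> set xs'"
proof (intro exI conjI)
  show "set (remove1 p xs) \<subseteq> set xs" by (rule set_remove1_subset)
  have "p \<in> set xs" using assms by (metis count_mset_0_iff not_numeral_le_zero)
  then show "mset xs = add_mset p (mset (remove1 p xs))" by simp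
  have "count (mset (remove1 p xs)) p \<ge> 1" using assms by simp
  then show "p \<in> set (remove1 p xs)" by (metis count_mset_0_iff not_one_le_zero)
qed

lemma rem_one:
  assumes "p \<in> set xs"
  shows "\<exists>xs'. set xs' \<subseteq> set xs \<and> mset xs = add_mset p (mset xs')"
  using assms by (intro exI[of _ "remove1 p xs"]) (auto simp: set_remove1_subset)

lemma EQ_subset: "EQ n \<phi> bs \<Longrightarrow> set bs' \<subseteq> set bs \<Longrightarrow> EQ n \<phi> bs'"
  unfolding EQ_def by blast

lemma contr_split:
  assumes "add_mset F \<Gamma> = add_mset \<phi> (add_mset \<phi> X)" "F \<noteq> \<phi>"
  shows "\<exists>X'. X = add_mset F X' \<and> \<Gamma> = add_mset \<phi> (add_mset \<phi> X')"
proof -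
  have "F \<in># add_mset F \<Gamma>" by simp
  then have "F \<in># add_mset \<phi> (add_mset \<phi> X)" using assms(1) by simp
  then have "F \<in># X" using assms(2) by simp
  then obtain X' where X': "X = add_mset F X'" by (metis multi_member_split)
  then have "\<Gamma> = add_mset \<phi> (add_mset \<phi> X')" using assms(1) by (simp add: add_mset_commute)
  then show ?thesis using X' by blast
qed

lemma contr_BRr:
  fixes \<phi> :: "'a fm"
  assumes "BRr m (add_mset \<phi> (add_mset \<phi> X)) D"
    and IH: "\<And>\<chi> Z (E::'a fm option). SD m (add_mset \<chi> (add_mset \<chi> Z)) E \<Longrightarrow> SD m (add_mset \<chi> Z) E"
  shows "BRr m (add_mset \<phi> X) D"
proof -
  obtain \<phi>0 \<psi> bs where o: "D = Some (CBox \<phi>0 \<psi>)" "bx bs \<subseteq># add_mset \<phi> (add_mset \<phi> X)" "EQ m \<phi>0 bs" "SD m (sn bs) (Some \<psi>)"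
    using assms(1) unfolding BRr_def by blast
  show ?thesis
  proof (cases "bx bs \<subseteq># add_mset \<phi> X")
    case True then show ?thesis by (rule BRrI[OF o(1) _ o(3) o(4)])
  next
    case False
    have c: "2 \<le> count (bx bs) \<phi>" by (rule not_sub_count[OF o(2) False])
    then have "\<phi> \<in># bx bs" unfolding count_greater_zero_iff[symmetric] by linarith
    from in_bx[OF this] obtain a b where ab: "\<phi> = CBox a b" by (elim exE)
    have "2 \<le> count (mset bs) (a, b)" using c unfolding ab count_bx .
    from rem_dup[OF this] obtain bs' where bs': "set bs' \<subseteq> set bs" "mset bs = add_mset (a, b) (mset bs')" "(a, b) \<in> set bs'"
      by blast
    obtain bs'' where bs'': "mset bs' = add_mset (a, b) (mset bs'')" using rem_one[OF bs'(3)] by blast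
    have e1: "sn bs = add_mset b (add_mset b (sn bs''))" using bs'(2) bs'' by simp
    have e2: "sn bs' = add_mset b (sn bs'')" using bs'' by simp
    have e3: "bx bs = add_mset \<phi> (bx bs')" using bs'(2) ab by simp
    have "SD m (add_mset b (add_mset b (sn bs''))) (Some \<psi>)" using o(4) unfolding e1 .
    then have "SD m (sn bs') (Some \<psi>)" unfolding e2 by (rule IH)
    moreover have "EQ m \<phi>0 bs'" by (rule EQ_subset[OF o(3) bs'(1)])
    moreover have "bx bs' \<subseteq># add_mset \<phi> X" using o(2) unfolding e3 by simp
    ultimately show ?thesis by (intro BRrI[OF o(1)])
  qed
qed



lemma contr_MRr:
  fixes \<phi> :: "'a fm"
  assumes "MRr m (add_mset \<phi> (add_mset \<phi> X)) D"
    and IH: "\<And>\<chi> Z (E::'a fm option). SD m (add_mset \<chi> (add_mset \<chi> Z)) E \<Longrightarrow> SD m (add_mset \<chi> Z) E"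
  shows "MRr m (add_mset \<phi> X) D"
proof -
  obtain \<phi>0 \<psi>0 bs ds Dp where o: "add_mset (CDia \<phi>0 \<psi>0) (bx bs + dx ds) \<subseteq># add_mset \<phi> (add_mset \<phi> X)"
      "EQ m \<phi>0 bs" "EQ m \<phi>0 ds" "SD m (add_mset \<psi>0 (sn bs + sn ds)) Dp" "tgt m \<phi>0 Dp D"
    using assms(1) unfolding MRr_def by blast
  let ?K = "add_mset (CDia \<phi>0 \<psi>0) (bx bs + dx ds)"
  have goal: "MRr m (add_mset \<phi> X) D" if
    "add_mset (CDia \<phi>0 \<psi>0) (bx bs' + dx ds') \<subseteq># add_mset \<phi> X" "set bs' \<subseteq> set bs" "set ds' \<subseteq> set ds"
    "SD m (add_mset \<psi>0 (sn bs' + sn ds')) Dp" for bs' ds'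
  proof -
    have "EQ m \<phi>0 bs'" by (rule EQ_subset[OF o(2) that(2)])
    moreover have "EQ m \<phi>0 ds'" by (rule EQ_subset[OF o(3) that(3)])
    ultimately show ?thesis by (intro MRrI[OF that(1) _ _ that(4) o(5)])
  qed
  show ?thesis
  proof (cases "?K \<subseteq># add_mset \<phi> X")
    case True then show ?thesis by (rule goal[OF _ _ _ o(4)]) simp_all
  next
    case False
    have c: "2 \<le> count ?K \<phi>" by (rule not_sub_count[OF o(1) False])
    then have "\<phi> \<in># ?K" unfolding count_greater_zero_iff[symmetric] by linarith
    then consider "\<phi> = CDia \<phi>0 \<psi>0" | "\<phi> \<in># bx bs" | "\<phi> \<in># dx ds" by auto
    then consider (bx) a b where "\<phi> = CBox a b" | (dx) a b where "\<phi> = CDia a b"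
    proof cases
      case 1 then show ?thesis using that(2) by blast
    next
      case 2 from in_bx[OF this] show ?thesis using that(1) by blast
    next
      case 3 from in_dx[OF this] show ?thesis using that(2) by blast
    qed
    then show ?thesis
    proof cases
      case (bx a b)
      have "count ?K \<phi> = count (mset bs) (a, b)"
        unfolding bx by (simp only: count_add_mset count_union count_bx count_dx_box) simp
      then have "2 \<le> count (mset bs) (a, b)" using c by linarith
      from rem_dup[OF this] obtain bs' where bs': "set bs' \<subseteq> set bs" "mset bs = add_mset (a, b) (mset bs')" "(a, b) \<in> set bs'"
        by blast
      obtain bs'' where bs'': "mset bs' = add_mset (a, b) (mset bs'')" using rem_one[OF bs'(3)] by blast
      have e1: "add_mset \<psi>0 (sn bs + sn ds) = add_mset b (add_mset b (add_mset \<psi>0 (sn bs'' + sn ds)))"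
        using bs'(2) bs'' by (simp add: add_mset_commute)
      have e2: "add_mset \<psi>0 (sn bs' + sn ds) = add_mset b (add_mset \<psi>0 (sn bs'' + sn ds))"
        using bs'' by (simp add: add_mset_commute)
      have e3: "?K = add_mset \<phi> (add_mset (CDia \<phi>0 \<psi>0) (bx bs' + dx ds))"
        using bs'(2) bx by (simp add: add_mset_commute)
      have "SD m (add_mset \<psi>0 (sn bs' + sn ds)) Dp" using o(4) unfolding e1 e2 by (rule IH)
      moreover have "add_mset (CDia \<phi>0 \<psi>0) (bx bs' + dx ds) \<subseteq># add_mset \<phi> X"
        using o(1) unfolding e3 by simp
      ultimately show ?thesis by (intro goal[OF _ bs'(1)]) simp_all
    next
      case (dx a b)
      show ?thesis
      proof (cases "2 \<le> count (mset ds) (a, b)")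
        case True
        from rem_dup[OF this] obtain ds' where ds': "set ds' \<subseteq> set ds" "mset ds = add_mset (a, b) (mset ds')" "(a, b) \<in> set ds'"
          by blast
        obtain ds'' where ds'': "mset ds' = add_mset (a, b) (mset ds'')" using rem_one[OF ds'(3)] by blast
        have e1: "add_mset \<psi>0 (sn bs + sn ds) = add_mset b (add_mset b (add_mset \<psi>0 (sn bs + sn ds'')))"
          using ds'(2) ds'' by (simp add: add_mset_commute)
        have e2: "add_mset \<psi>0 (sn bs + sn ds') = add_mset b (add_mset \<psi>0 (sn bs + sn ds''))"
          using ds'' by (simp add: add_mset_commute)
        have e3: "?K = add_mset \<phi> (add_mset (CDia \<phi>0 \<psi>0) (bx bs + dx ds'))"
          using ds'(2) dx by (simp add: add_mset_commute)
        have "SD m (add_mset \<psi>0 (sn bs + sn ds')) Dp" using o(4) unfolding e1 e2 by (rule IH)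
        moreover have "add_mset (CDia \<phi>0 \<psi>0) (bx bs + dx ds') \<subseteq># add_mset \<phi> X"
          using o(1) unfolding e3 by simp
        ultimately show ?thesis by (intro goal[OF _ _ ds'(1)]) simp_all
      next
        case False
        have cnt: "count ?K \<phi> = (if CDia \<phi>0 \<psi>0 = \<phi> then 1 else 0) + count (mset ds) (a, b)"
          unfolding dx by (simp only: count_add_mset count_union count_dx count_bx_dia) simp
        have e: "\<phi> = CDia \<phi>0 \<psi>0"
        proof (rule ccontr)
          assume "\<phi> \<noteq> CDia \<phi>0 \<psi>0"
          then have "count ?K \<phi> = count (mset ds) (a, b)" using cnt by simp
          then show False using c False by linarith
        qed
        then have ab: "a = \<phi>0" "b = \<psi>0" using dx by auto
        have "count (mset ds) (a, b) \<noteq> 0" using cnt c e by simp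
        then have "(a, b) \<in> set ds" by simp
        from rem_one[OF this] obtain ds' where ds': "set ds' \<subseteq> set ds" "mset ds = add_mset (a, b) (mset ds')" by blast
        have e1: "add_mset \<psi>0 (sn bs + sn ds) = add_mset \<psi>0 (add_mset \<psi>0 (sn bs + sn ds'))"
          using ds'(2) ab by (simp add: add_mset_commute)
        have e3: "?K = add_mset \<phi> (add_mset (CDia \<phi>0 \<psi>0) (bx bs + dx ds'))"
          using ds'(2) dx ab by (simp add: add_mset_commute)
        have "SD m (add_mset \<psi>0 (sn bs + sn ds')) Dp" using o(4) unfolding e1 by (rule IH)
        moreover have "add_mset (CDia \<phi>0 \<psi>0) (bx bs + dx ds') \<subseteq># add_mset \<phi> X"
          using o(1) unfolding e3 by simp
        ultimately show ?thesis by (intro goal[OF _ _ ds'(1)]) simp_all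
      qed
    qed
  qed
qed


lemma SD_contr: "SD n (add_mset \<phi> (add_mset \<phi> X)) D \<Longrightarrow> SD n (add_mset \<phi> X) D"
proof (induction n arbitrary: \<phi> X D rule: less_induct)
  case (less n)
  have IH: "\<And>m \<chi> Z (E::'a fm option). m < n \<Longrightarrow> SD m (add_mset \<chi> (add_mset \<chi> Z)) E \<Longrightarrow> SD m (add_mset \<chi> Z) E"
    using less.IH by blast
  from less.prems show ?case
  proof (cases rule: SD_elim)
    case (init p \<Gamma>)
    have "Atom p \<in># add_mset (Atom p) \<Gamma>" by simp
    then have "Atom p \<in># add_mset \<phi> (add_mset \<phi> X)" using init(1) by simp
    then have "Atom p \<in># add_mset \<phi> X" by auto
    then show ?thesis using init(2) by (simp add: SD_init')
  next
    case botL
    then have "Bot \<in># add_mset \<phi> X" by auto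
    then show ?thesis by (rule SD_botL')
  next
    case (andL m A B \<Gamma>)
    show ?thesis
    proof (cases "\<phi> = And A B")
      case True
      then have G: "\<Gamma> = add_mset \<phi> X" using andL(2) by simp
      have "SD m (add_mset (And A B) (add_mset A (add_mset B X))) D" using andL(3) G True by (simp add: add_mset_commute)
      then have "SD m (add_mset A (add_mset B (add_mset A (add_mset B X)))) D" by (rule inv_andL)
      then have "SD m (add_mset A (add_mset A (add_mset B (add_mset B X)))) D" by (simp add: add_mset_commute)
      then have "SD m (add_mset A (add_mset B (add_mset B X))) D" using IH andL(1) by blast
      then have "SD m (add_mset B (add_mset B (add_mset A X))) D" by (simp add: add_mset_commute)
      then have "SD m (add_mset B (add_mset A X)) D" using IH andL(1) by blast
      then have "SD (Suc m) (add_mset (And A B) X) D" by (intro SD.andL) (simp add: add_mset_commute)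
      then show ?thesis using True andL(1) by simp
    next
      case False
      from contr_split[OF andL(2)[symmetric] not_sym[OF False]] obtain X' where X': "X = add_mset (And A B) X'" "\<Gamma> = add_mset \<phi> (add_mset \<phi> X')"
        by blast
      have "SD m (add_mset \<phi> (add_mset \<phi> (add_mset A (add_mset B X')))) D" using andL(3) X' by (simp add: add_mset_commute)
      then have "SD m (add_mset \<phi> (add_mset A (add_mset B X'))) D" using IH andL(1) by blast
      then have "SD (Suc m) (add_mset (And A B) (add_mset \<phi> X')) D" by (intro SD.andL) (simp add: add_mset_commute)
      then show ?thesis using X' andL(1) by (simp add: add_mset_commute)
    qed
  next
    case (andR m A B) then show ?thesis using IH by (auto intro: SD.andR)
  next
    case (orL m A B \<Gamma>)
    show ?thesis
    proof (cases "\<phi> = Or A B")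
      case True
      then have G: "\<Gamma> = add_mset \<phi> X" using orL(2) by simp
      have "SD m (add_mset (Or A B) (add_mset A X)) D" using orL(3) G True by (simp add: add_mset_commute)
      then have "SD m (add_mset A (add_mset A X)) D" by (rule inv_orL1)
      then have a: "SD m (add_mset A X) D" using IH orL(1) by blast
      have "SD m (add_mset (Or A B) (add_mset B X)) D" using orL(4) G True by (simp add: add_mset_commute)
      then have "SD m (add_mset B (add_mset B X)) D" by (rule inv_orL2)
      then have b: "SD m (add_mset B X) D" using IH orL(1) by blast
      have "SD (Suc m) (add_mset (Or A B) X) D" by (rule SD.orL[OF a b])
      then show ?thesis using True orL(1) by simp
    next
      case False
      from contr_split[OF orL(2)[symmetric] not_sym[OF False]] obtain X' where X': "X = add_mset (Or A B) X'" "\<Gamma> = add_mset \<phi> (add_mset \<phi> X')"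
        by blast
      have "SD m (add_mset \<phi> (add_mset \<phi> (add_mset A X'))) D" using orL(3) X' by (simp add: add_mset_commute)
      then have a: "SD m (add_mset \<phi> (add_mset A X')) D" using IH orL(1) by blast
      have "SD m (add_mset \<phi> (add_mset \<phi> (add_mset B X'))) D" using orL(4) X' by (simp add: add_mset_commute)
      then have b: "SD m (add_mset \<phi> (add_mset B X')) D" using IH orL(1) by blast
      have "SD (Suc m) (add_mset (Or A B) (add_mset \<phi> X')) D"
        by (rule SD.orL) (use a b in \<open>simp_all add: add_mset_commute\<close>)
      then show ?thesis using X' orL(1) by (simp add: add_mset_commute)
    qed
  next
    case (orR1 m A B) then show ?thesis using IH by (auto intro: SD.orR1)
  next
    case (orR2 m A B) then show ?thesis using IH by (auto intro: SD.orR2)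
  next
    case (impR m A B)
    have "SD m (add_mset \<phi> (add_mset \<phi> (add_mset A X))) (Some B)" using impR(3) by (simp add: add_mset_commute)
    then have "SD m (add_mset \<phi> (add_mset A X)) (Some B)" using IH impR(1) by blast
    then have "SD (Suc m) (add_mset \<phi> X) (Some (Imp A B))" by (intro SD.impR) (simp add: add_mset_commute)
    then show ?thesis using impR by simp
  next
    case (impL m A B \<Gamma>)
    show ?thesis
    proof (cases "\<phi> = Imp A B")
      case True
      then have G: "\<Gamma> = add_mset \<phi> X" using impL(2) by simp
      have "SD m (add_mset \<phi> (add_mset \<phi> X)) (Some A)" using impL(3) G True by simp
      then have a: "SD m (add_mset (Imp A B) X) (Some A)" using IH impL(1) True by blast
      have "SD m (add_mset (Imp A B) (add_mset B X)) D" using impL(4) G True by (simp add: add_mset_commute)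
      then have "SD m (add_mset B (add_mset B X)) D" by (rule inv_impL)
      then have b: "SD m (add_mset B X) D" using IH impL(1) by blast
      have "SD (Suc m) (add_mset (Imp A B) X) D" by (rule SD.impL[OF a b])
      then show ?thesis using True impL(1) by simp
    next
      case False
      from contr_split[OF impL(2)[symmetric] not_sym[OF False]] obtain X' where X': "X = add_mset (Imp A B) X'" "\<Gamma> = add_mset \<phi> (add_mset \<phi> X')"
        by blast
      have "SD m (add_mset \<phi> (add_mset \<phi> (add_mset (Imp A B) X'))) (Some A)" using impL(3) X' by (simp add: add_mset_commute)
      then have a: "SD m (add_mset \<phi> (add_mset (Imp A B) X')) (Some A)" using IH impL(1) by blast
      have "SD m (add_mset \<phi> (add_mset \<phi> (add_mset B X'))) D" using impL(4) X' by (simp add: add_mset_commute)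
      then have b: "SD m (add_mset \<phi> (add_mset B X')) D" using IH impL(1) by blast
      have "SD (Suc m) (add_mset (Imp A B) (add_mset \<phi> X')) D"
        by (rule SD.impL) (use a b in \<open>simp_all add: add_mset_commute\<close>)
      then show ?thesis using X' impL(1) by (simp add: add_mset_commute)
    qed
  next
    case (box m)
    have "BRr m (add_mset \<phi> X) D" by (rule contr_BRr[OF box(2)]) (use IH box(1) in blast)
    then show ?thesis using box(1) BRr_SD by blast
  next
    case (mr m)
    have "MRr m (add_mset \<phi> X) D" by (rule contr_MRr[OF mr(2)]) (use IH mr(1) in blast)
    then show ?thesis using mr(1) MRr_SD by blast
  qed
qed

lemma SD_contr_mset: "SD n (Y + Y + X) D \<Longrightarrow> SD n (Y + X) D"
proof (induction Y arbitrary: X)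
  case empty then show ?case by simp
next
  case (add y Y)
  have "SD n (add_mset y (add_mset y (Y + Y + X))) D" using add.prems by (simp add: add_mset_commute)
  then have "SD n (add_mset y (Y + Y + X)) D" by (rule SD_contr)
  then have "SD n (Y + Y + add_mset y X) D" by simp
  then have "SD n (Y + add_mset y X) D" by (rule add.IH)
  then show ?case by simp
qed


section \<open>Cut\<close>

definition bnd :: "nat \<Rightarrow> 'a fm multiset \<Rightarrow> bool" where
  "bnd M X \<longleftrightarrow> (\<forall>x\<in>#X. size x < M)"

definition bndo :: "nat \<Rightarrow> 'a fm option \<Rightarrow> bool" where
  "bndo M D \<longleftrightarrow> (\<forall>x\<in>set_option D. size x < M)"

definition cut_ok :: "nat \<Rightarrow> 'a fm multiset \<Rightarrow> 'a fm multiset \<Rightarrow> 'a fm \<Rightarrow> 'a fm option \<Rightarrow> nat \<Rightarrow> nat \<Rightarrow> bool" where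
  "cut_ok M \<Gamma> \<Gamma>' A D n1 n2 \<longleftrightarrow> (SD n1 \<Gamma> (Some A) \<longrightarrow> SD n2 (add_mset A \<Gamma>') D \<longrightarrow> bnd M \<Gamma> \<longrightarrow> bnd M \<Gamma>'
     \<longrightarrow> size A < M \<longrightarrow> bndo M D \<longrightarrow> SDerivable (\<Gamma> + \<Gamma>') D)"

lemma bnd_add[simp]: "bnd M (add_mset x X) \<longleftrightarrow> size x < M \<and> bnd M X"
  by (auto simp: bnd_def)

lemma bnd_union[simp]: "bnd M (X + Y) \<longleftrightarrow> bnd M X \<and> bnd M Y"
  by (auto simp: bnd_def)

lemma bnd_empty[simp]: "bnd M {#}"
  by (auto simp: bnd_def)

lemma bndo_simps[simp]: "bndo M None" "bndo M (Some x) \<longleftrightarrow> size x < M"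
  by (auto simp: bndo_def)

lemma bnd_sub: "bnd M Y \<Longrightarrow> X \<subseteq># Y \<Longrightarrow> bnd M X"
  unfolding bnd_def by (meson mset_subset_eqD)

lemma bnd_mono: "bnd M X \<Longrightarrow> M \<le> M' \<Longrightarrow> bnd M' X"
  unfolding bnd_def by fastforce

lemma bnd_in: "bnd M X \<Longrightarrow> x \<in># X \<Longrightarrow> size x < M"
  unfolding bnd_def by blast

lemma bnd_bx: assumes "bnd M (bx bs)" "p \<in> set bs" shows "size (fst p) < M - 1" "size (snd p) < M - 1"
proof -
  have "CBox (fst p) (snd p) \<in># bx bs" using assms(2) by (force simp: case_prod_beta)
  then have "size (CBox (fst p) (snd p)) < M" using assms(1) bnd_in by blast
  then show "size (fst p) < M - 1" "size (snd p) < M - 1" by simp_all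
qed

lemma bnd_dx: assumes "bnd M (dx bs)" "p \<in> set bs" shows "size (fst p) < M - 1" "size (snd p) < M - 1"
proof -
  have "CDia (fst p) (snd p) \<in># dx bs" using assms(2) by (force simp: case_prod_beta)
  then have "size (CDia (fst p) (snd p)) < M" using assms(1) bnd_in by blast
  then show "size (fst p) < M - 1" "size (snd p) < M - 1" by simp_all
qed

lemma bnd_sn_bx: assumes "bnd M (bx bs)" shows "bnd (M - 1) (sn bs)"
  unfolding bnd_def using bnd_bx(2)[OF assms] by auto

lemma bnd_sn_dx: assumes "bnd M (dx bs)" shows "bnd (M - 1) (sn bs)"
  unfolding bnd_def using bnd_dx(2)[OF assms] by auto

lemma left_analysis:
  fixes A :: "'a fm"
  assumes L: "SD n1 \<Gamma> (Some A)" and R: "SD n2 (add_mset A \<Gamma>') D"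
    and IHh: "\<And>\<Gamma>0 \<Gamma>0' (D0::'a fm option) m1 m2. m1 + m2 < n1 + n2 \<Longrightarrow> cut_ok M \<Gamma>0 \<Gamma>0' A D0 m1 m2"
    and b: "bnd M \<Gamma>" "bnd M \<Gamma>'" "size A < M" "bndo M D"
  obtains "SDerivable (\<Gamma> + \<Gamma>') D"
  | (andR) m B C where "n1 = Suc m" "A = And B C" "SD m \<Gamma> (Some B)" "SD m \<Gamma> (Some C)"
  | (orR1) m B C where "n1 = Suc m" "A = Or B C" "SD m \<Gamma> (Some B)"
  | (orR2) m B C where "n1 = Suc m" "A = Or B C" "SD m \<Gamma> (Some C)"
  | (impR) m B C where "n1 = Suc m" "A = Imp B C" "SD m (add_mset B \<Gamma>) (Some C)"
  | (box) m \<phi> \<psi> bs where "n1 = Suc m" "A = CBox \<phi> \<psi>" "bx bs \<subseteq># \<Gamma>" "EQ m \<phi> bs" "SD m (sn bs) (Some \<psi>)"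
  | (dia) m \<phi> \<psi> bs ds \<eta> \<theta> where "n1 = Suc m" "A = CDia \<eta> \<theta>" "add_mset (CDia \<phi> \<psi>) (bx bs + dx ds) \<subseteq># \<Gamma>"
      "EQ m \<phi> bs" "EQ m \<phi> ds" "SD m (add_mset \<psi> (sn bs + sn ds)) (Some \<theta>)" "SD m {#\<phi>#} (Some \<eta>)" "SD m {#\<eta>#} (Some \<phi>)"
  using L
proof (cases rule: SD_elim)
  case (init p \<Gamma>0)
  have "add_mset A \<Gamma>' \<subseteq># \<Gamma> + \<Gamma>'" using init by simp
  then have "SD n2 (\<Gamma> + \<Gamma>') D" using SD_weak R by blast
  then show ?thesis using that(1) unfolding SDerivable_def by blast
next
  case botL then have "Bot \<in># \<Gamma> + \<Gamma>'" by simp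
  then show ?thesis by (rule that(1)[OF Dv_botL])
next
  case (andL m B C \<Gamma>0)
  have "SDerivable (add_mset B (add_mset C \<Gamma>0) + \<Gamma>') D"
    using IHh[of m n2 "add_mset B (add_mset C \<Gamma>0)" \<Gamma>' D] andL R b unfolding cut_ok_def by simp
  then have "SDerivable (add_mset B (add_mset C (\<Gamma>0 + \<Gamma>'))) D" by simp
  then have "SDerivable (add_mset (And B C) (\<Gamma>0 + \<Gamma>')) D" by (rule Dv_andL)
  then show ?thesis using that(1) andL by simp
next
  case (orL m B C \<Gamma>0)
  have "SDerivable (add_mset B \<Gamma>0 + \<Gamma>') D"
    using IHh[of m n2 "add_mset B \<Gamma>0" \<Gamma>' D] orL R b unfolding cut_ok_def by simp
  moreover have "SDerivable (add_mset C \<Gamma>0 + \<Gamma>') D"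
    using IHh[of m n2 "add_mset C \<Gamma>0" \<Gamma>' D] orL R b unfolding cut_ok_def by simp
  ultimately have "SDerivable (add_mset (Or B C) (\<Gamma>0 + \<Gamma>')) D" by (intro Dv_orL) simp_all
  then show ?thesis using that(1) orL by simp
next
  case (impL m B C \<Gamma>0)
  have "SDerivable (add_mset C \<Gamma>0 + \<Gamma>') D"
    using IHh[of m n2 "add_mset C \<Gamma>0" \<Gamma>' D] impL R b unfolding cut_ok_def by simp
  moreover have "SD m (add_mset (Imp B C) \<Gamma>0 + \<Gamma>') (Some B)" using impL(3) by (rule SD_weak_add)
  then have "SD m (add_mset (Imp B C) (\<Gamma>0 + \<Gamma>')) (Some B)" by simp
  then have "SDerivable (add_mset (Imp B C) (\<Gamma>0 + \<Gamma>')) (Some B)" unfolding SDerivable_def by (rule exI)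
  ultimately show ?thesis using that(1) impL Dv_impL[of B C "\<Gamma>0 + \<Gamma>'" D] by simp
next
  case (andR m B C) then show ?thesis using that(2) by blast
next
  case (orR1 m B C) then show ?thesis using that(3) by blast
next
  case (orR2 m B C) then show ?thesis using that(4) by blast
next
  case (impR m B C) then show ?thesis using that(5) by blast
next
  case (box m)
  then obtain \<phi> \<psi> bs where "Some A = Some (CBox \<phi> \<psi>)" "bx bs \<subseteq># \<Gamma>" "EQ m \<phi> bs" "SD m (sn bs) (Some \<psi>)"
    unfolding BRr_def by blast
  then show ?thesis using that(6) box(1) by simp
next
  case (mr m)
  then obtain \<phi> \<psi> bs ds Dp where o: "add_mset (CDia \<phi> \<psi>) (bx bs + dx ds) \<subseteq># \<Gamma>" "EQ m \<phi> bs" "EQ m \<phi> ds"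
      "SD m (add_mset \<psi> (sn bs + sn ds)) Dp" "tgt m \<phi> Dp (Some A)"
    unfolding MRr_def by blast
  show ?thesis
  proof (cases "Dp = None")
    case True
    have "add_mset (CDia \<phi> \<psi>) (bx bs + dx ds) \<subseteq># \<Gamma> + \<Gamma>'" by (rule subset_mset.order_trans[OF o(1)]) simp
    moreover have "tgt m \<phi> Dp D" using True by (simp add: tgt_def)
    ultimately have "SD (Suc m) (\<Gamma> + \<Gamma>') D" by (rule SD_MR'[OF _ o(2,3,4)])
    then show ?thesis using that(1) unfolding SDerivable_def by blast
  next
    case False
    then obtain \<eta> \<theta> where e: "Dp = Some \<theta>" "Some A = Some (CDia \<eta> \<theta>)" "SD m {#\<phi>#} (Some \<eta>)" "SD m {#\<eta>#} (Some \<phi>)"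
      using o(5) unfolding tgt_def by blast
    show ?thesis using that(7)[OF mr(1) _ o(1-3)] o(4) e by simp
  qed
qed


lemma SD_Dv: "SD n X D \<Longrightarrow> SDerivable X D"
  unfolding SDerivable_def by (rule exI)

lemma Dv_contr_mset: "SDerivable (Y + Y + X) D \<Longrightarrow> SDerivable (Y + X) D"
  unfolding SDerivable_def using SD_contr_mset by blast

lemma cut_and:
  fixes A :: "'a fm"
  assumes IHk: "\<And>\<Gamma>0 \<Gamma>0' (B::'a fm) D0 m1 m2. size B < size A \<Longrightarrow> cut_ok M \<Gamma>0 \<Gamma>0' B D0 m1 m2"
    and A: "A = And B C" and L: "SD m \<Gamma> (Some B)" "SD m \<Gamma> (Some C)"
    and R: "SD k (add_mset B (add_mset C \<Gamma>')) D"
    and b: "bnd M \<Gamma>" "bnd M \<Gamma>'" "size A < M" "bndo M D"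
  shows "SDerivable (\<Gamma> + \<Gamma>') D"
proof -
  have "SDerivable (\<Gamma> + add_mset C \<Gamma>') D"
    using IHk[of B \<Gamma> "add_mset C \<Gamma>'" D m k] L R b A unfolding cut_ok_def by simp
  then obtain n where n: "SD n (add_mset C (\<Gamma> + \<Gamma>')) D" unfolding SDerivable_def by auto
  have "SDerivable (\<Gamma> + (\<Gamma> + \<Gamma>')) D"
    using IHk[of C \<Gamma> "\<Gamma> + \<Gamma>'" D m n] L n b A unfolding cut_ok_def by simp
  then show ?thesis using Dv_contr_mset[of \<Gamma> \<Gamma>' D] by (simp add: add.assoc)
qed

lemma cut_or:
  fixes A B :: "'a fm"
  assumes IHk: "\<And>\<Gamma>0 \<Gamma>0' (B::'a fm) D0 m1 m2. size B < size A \<Longrightarrow> cut_ok M \<Gamma>0 \<Gamma>0' B D0 m1 m2"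
    and A: "size B < size A" and L: "SD m \<Gamma> (Some B)"
    and R: "SD k (add_mset B \<Gamma>') D"
    and b: "bnd M \<Gamma>" "bnd M \<Gamma>'" "size A < M" "bndo M D"
  shows "SDerivable (\<Gamma> + \<Gamma>') D"
  using IHk[of B \<Gamma> \<Gamma>' D m k] L R b A unfolding cut_ok_def by simp

lemma cut_imp:
  fixes A :: "'a fm"
  assumes IHk: "\<And>\<Gamma>0 \<Gamma>0' (B::'a fm) D0 m1 m2. size B < size A \<Longrightarrow> cut_ok M \<Gamma>0 \<Gamma>0' B D0 m1 m2"
    and A: "A = Imp B C" and L: "SD m (add_mset B \<Gamma>) (Some C)"
    and R1: "SDerivable (\<Gamma> + \<Gamma>') (Some B)" and R2: "SD k (add_mset C \<Gamma>') D"
    and b: "bnd M \<Gamma>" "bnd M \<Gamma>'" "size A < M" "bndo M D"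
  shows "SDerivable (\<Gamma> + \<Gamma>') D"
proof -
  obtain n where n: "SD n (\<Gamma> + \<Gamma>') (Some B)" using R1 unfolding SDerivable_def by auto
  have "SDerivable ((\<Gamma> + \<Gamma>') + \<Gamma>) (Some C)"
    using IHk[of B "\<Gamma> + \<Gamma>'" \<Gamma> "Some C" n m] L n b A unfolding cut_ok_def by simp
  then obtain n' where n': "SD n' ((\<Gamma> + \<Gamma>') + \<Gamma>) (Some C)" unfolding SDerivable_def by auto
  have "SDerivable (((\<Gamma> + \<Gamma>') + \<Gamma>) + \<Gamma>') D"
    using IHk[of C "(\<Gamma> + \<Gamma>') + \<Gamma>" \<Gamma>' D n' k] R2 n' b A unfolding cut_ok_def by simp
  then have "SDerivable ((\<Gamma> + \<Gamma>') + (\<Gamma> + \<Gamma>') + {#}) D" by (simp add: ac_simps)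
  then have "SDerivable ((\<Gamma> + \<Gamma>') + {#}) D" by (rule Dv_contr_mset)
  then show ?thesis by simp
qed

lemma trans_v:
  fixes a :: "'a fm"
  assumes CUT: "\<And>\<Gamma>0 \<Gamma>0' (B::'a fm) D0. SDerivable \<Gamma>0 (Some B) \<Longrightarrow> SDerivable (add_mset B \<Gamma>0') D0 \<Longrightarrow> bnd M' \<Gamma>0
        \<Longrightarrow> bnd M' \<Gamma>0' \<Longrightarrow> size B < M' \<Longrightarrow> bndo M' D0 \<Longrightarrow> SDerivable (\<Gamma>0 + \<Gamma>0') D0"
    and "SDerivable {#a#} (Some b)" "SDerivable {#b#} (Some c)" "size a < M'" "size b < M'" "size c < M'"
  shows "SDerivable {#a#} (Some c)"
  using CUT[of "{#a#}" b "{#}" "Some c"] assms(2-) by simp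

lemma EQv_append[simp]: "EQv \<phi> (xs @ ys) \<longleftrightarrow> EQv \<phi> xs \<and> EQv \<phi> ys"
  unfolding EQv_def by auto

lemma EQv_Cons[simp]: "EQv \<phi> (x # ys) \<longleftrightarrow> (SDerivable {#\<phi>#} (Some (fst x)) \<and> SDerivable {#fst x#} (Some \<phi>)) \<and> EQv \<phi> ys"
  unfolding EQv_def by auto

lemma EQv_subset: "EQv \<phi> bs \<Longrightarrow> set bs' \<subseteq> set bs \<Longrightarrow> EQv \<phi> bs'"
  unfolding EQv_def by blast

lemma EQv_trans:
  fixes \<phi> :: "'a fm"
  assumes CUT: "\<And>\<Gamma>0 \<Gamma>0' (B::'a fm) D0. SDerivable \<Gamma>0 (Some B) \<Longrightarrow> SDerivable (add_mset B \<Gamma>0') D0 \<Longrightarrow> bnd M' \<Gamma>0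
        \<Longrightarrow> bnd M' \<Gamma>0' \<Longrightarrow> size B < M' \<Longrightarrow> bndo M' D0 \<Longrightarrow> SDerivable (\<Gamma>0 + \<Gamma>0') D0"
    and "EQv \<phi> bs" "\<forall>p\<in>set bs. size (fst p) < M'" "SDerivable {#\<phi>'#} (Some \<phi>)" "SDerivable {#\<phi>#} (Some \<phi>')"
      "size \<phi> < M'" "size \<phi>' < M'"
  shows "EQv \<phi>' bs"
  unfolding EQv_def
proof
  fix p assume p: "p \<in> set bs"
  then have 1: "SDerivable {#\<phi>#} (Some (fst p))" "SDerivable {#fst p#} (Some \<phi>)" using assms(2) unfolding EQv_def by auto
  have s: "size (fst p) < M'" using assms(3) p by blast
  have "SDerivable {#\<phi>'#} (Some (fst p))"
    using CUT[of "{#\<phi>'#}" \<phi> "{#}" "Some (fst p)"] assms(4,6,7) 1(1) s by simp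
  moreover have "SDerivable {#fst p#} (Some \<phi>')"
    using CUT[of "{#fst p#}" \<phi> "{#}" "Some \<phi>'"] assms(5,6,7) 1(2) s by simp
  ultimately show "SDerivable {#\<phi>'#} (Some (fst p)) \<and> SDerivable {#fst p#} (Some \<phi>')" by blast
qed

lemma tgt_tgtv: "tgt n \<phi> Dp D \<Longrightarrow> tgtv \<phi> Dp D"
  unfolding tgt_def tgtv_def using SD_Dv by blast

lemma tgt_bndo: "tgt n \<phi> Dp D \<Longrightarrow> bndo M D \<Longrightarrow> bndo (M - 1) Dp"
  unfolding tgt_def by auto

lemma in_bx_pair: assumes "CBox a b \<in># bx bs" shows "(a, b) \<in> set bs"
proof -
  have "0 < count (bx bs) (CBox a b)" using assms by (simp only: count_greater_zero_iff)
  then have "0 < count (mset bs) (a, b)" by (simp only: count_bx)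
  then have "(a, b) \<in># mset bs" by (simp only: count_greater_zero_iff)
  then show ?thesis by simp
qed

lemma in_dx_pair: assumes "CDia a b \<in># dx bs" shows "(a, b) \<in> set bs"
proof -
  have "0 < count (dx bs) (CDia a b)" using assms by (simp only: count_greater_zero_iff)
  then have "0 < count (mset bs) (a, b)" by (simp only: count_dx)
  then have "(a, b) \<in># mset bs" by (simp only: count_greater_zero_iff)
  then show ?thesis by simp
qed

lemma fst_bnd_bx: "bnd M (bx bs) \<Longrightarrow> \<forall>p\<in>set bs. size (fst p) < M - 1"
  using bnd_bx(1) by blast

lemma fst_bnd_dx: "bnd M (dx bs) \<Longrightarrow> \<forall>p\<in>set bs. size (fst p) < M - 1"
  using bnd_dx(1) by blast



definition cutv :: "nat \<Rightarrow> 'a itself \<Rightarrow> bool" where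
  "cutv M' T \<longleftrightarrow> (\<forall>\<Gamma>0 \<Gamma>0' (B::'a fm) D0. SDerivable \<Gamma>0 (Some B) \<longrightarrow> SDerivable (add_mset B \<Gamma>0') D0 \<longrightarrow> bnd M' \<Gamma>0
        \<longrightarrow> bnd M' \<Gamma>0' \<longrightarrow> size B < M' \<longrightarrow> bndo M' D0 \<longrightarrow> SDerivable (\<Gamma>0 + \<Gamma>0') D0)"

lemma cutvD:
  fixes B :: "'a fm"
  assumes "cutv M' TYPE('a)" "SDerivable \<Gamma>0 (Some B)" "SDerivable (add_mset B \<Gamma>0') D0" "bnd M' \<Gamma>0"
        "bnd M' \<Gamma>0'" "size B < M'" "bndo M' D0"
  shows "SDerivable (\<Gamma>0 + \<Gamma>0') D0"
  using assms unfolding cutv_def by blast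

lemma EQ_at: assumes "EQ k \<phi> bs" "(a, b) \<in> set bs" shows "SDerivable {#\<phi>#} (Some a)" "SDerivable {#a#} (Some \<phi>)"
proof -
  have "SD k {#\<phi>#} (Some (fst (a, b))) \<and> SD k {#fst (a, b)#} (Some \<phi>)" using assms unfolding EQ_def by blast
  then show "SDerivable {#\<phi>#} (Some a)" "SDerivable {#a#} (Some \<phi>)" using SD_Dv by auto
qed

lemma cut_box_box:
  fixes A :: "'a fm"
  assumes CUTv: "cutv (M - 1) TYPE('a)"
    and L: "A = CBox \<phi> \<psi>" "bx bs1 \<subseteq># \<Gamma>" "EQ m \<phi> bs1" "SD m (sn bs1) (Some \<psi>)"
    and R: "D = Some (CBox \<phi>2 \<psi>2)" "bx bs2 \<subseteq># add_mset A \<Gamma>'" "EQ k \<phi>2 bs2" "SD k (sn bs2) (Some \<psi>2)" "A \<in># bx bs2"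
    and b: "bnd M \<Gamma>" "bnd M \<Gamma>'" "size A < M" "bndo M D"
  shows "SDerivable (\<Gamma> + \<Gamma>') D"
proof -
  have CUT: "\<And>\<Gamma>0 \<Gamma>0' (B::'a fm) D0. SDerivable \<Gamma>0 (Some B) \<Longrightarrow> SDerivable (add_mset B \<Gamma>0') D0 \<Longrightarrow> bnd (M - 1) \<Gamma>0
        \<Longrightarrow> bnd (M - 1) \<Gamma>0' \<Longrightarrow> size B < M - 1 \<Longrightarrow> bndo (M - 1) D0 \<Longrightarrow> SDerivable (\<Gamma>0 + \<Gamma>0') D0"
    by (rule cutvD[OF CUTv])
  have "(\<phi>, \<psi>) \<in> set bs2" using R(5) L(1) in_bx_pair by simp
  from rem_one[OF this] obtain bs2' where bs2': "set bs2' \<subseteq> set bs2" "mset bs2 = add_mset (\<phi>, \<psi>) (mset bs2')" by blast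
  have e1: "bx bs2 = add_mset A (bx bs2')" using bs2'(2) L(1) by simp
  have e2: "sn bs2 = add_mset \<psi> (sn bs2')" using bs2'(2) by simp
  have sub2: "bx bs2' \<subseteq># \<Gamma>'" using R(2) unfolding e1 by simp
  have bb1: "bnd M (bx bs1)" by (rule bnd_sub[OF b(1) L(2)])
  have bb2: "bnd M (bx bs2')" by (rule bnd_sub[OF b(2) sub2])
  have s: "size \<phi> < M - 1" "size \<psi> < M - 1" "size \<phi>2 < M - 1" "size \<psi>2 < M - 1"
    using b(3,4) L(1) R(1) by auto
  have eq: "SDerivable {#\<phi>2#} (Some \<phi>)" "SDerivable {#\<phi>#} (Some \<phi>2)"
    using EQ_at[OF R(3) \<open>(\<phi>, \<psi>) \<in> set bs2\<close>] by auto
  have "EQv \<phi>2 bs1"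
    by (rule EQv_trans[OF CUT EQ_EQv[OF L(3)] fst_bnd_bx[OF bb1] eq s(1) s(3)])
  moreover have "EQv \<phi>2 bs2'" using EQv_subset[OF EQ_EQv[OF R(3)] bs2'(1)] .
  ultimately have EQ: "EQv \<phi>2 (bs1 @ bs2')" by simp
  have "SDerivable (sn bs1 + sn bs2') (Some \<psi>2)"
  proof (rule CUT)
    show "SDerivable (sn bs1) (Some \<psi>)" using L(4) by (rule SD_Dv)
    show "SDerivable (add_mset \<psi> (sn bs2')) (Some \<psi>2)" using R(4) unfolding e2 by (rule SD_Dv)
    show "bnd (M - 1) (sn bs1)" by (rule bnd_sn_bx[OF bb1])
    show "bnd (M - 1) (sn bs2')" by (rule bnd_sn_bx[OF bb2])
  qed (use s in simp_all)
  then have P: "SDerivable (sn (bs1 @ bs2')) (Some \<psi>2)" by simp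
  have "bx (bs1 @ bs2') \<subseteq># \<Gamma> + \<Gamma>'" using subset_mset.add_mono[OF L(2) sub2] by simp
  from Dv_box[OF this EQ P] show ?thesis using R(1) by simp
qed

lemma cut_box_MR:
  fixes A :: "'a fm"
  assumes CUTv: "cutv (M - 1) TYPE('a)"
    and L: "A = CBox \<phi> \<psi>" "bx bs1 \<subseteq># \<Gamma>" "EQ m \<phi> bs1" "SD m (sn bs1) (Some \<psi>)"
    and R: "add_mset (CDia \<phi>2 \<psi>2) (bx bs2 + dx ds2) \<subseteq># add_mset A \<Gamma>'" "EQ k \<phi>2 bs2" "EQ k \<phi>2 ds2"
      "SD k (add_mset \<psi>2 (sn bs2 + sn ds2)) Dp" "tgt k \<phi>2 Dp D" "A \<in># bx bs2"
    and b: "bnd M \<Gamma>" "bnd M \<Gamma>'" "size A < M" "bndo M D"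
  shows "SDerivable (\<Gamma> + \<Gamma>') D"
proof -
  have CUT: "\<And>\<Gamma>0 \<Gamma>0' (B::'a fm) D0. SDerivable \<Gamma>0 (Some B) \<Longrightarrow> SDerivable (add_mset B \<Gamma>0') D0 \<Longrightarrow> bnd (M - 1) \<Gamma>0
        \<Longrightarrow> bnd (M - 1) \<Gamma>0' \<Longrightarrow> size B < M - 1 \<Longrightarrow> bndo (M - 1) D0 \<Longrightarrow> SDerivable (\<Gamma>0 + \<Gamma>0') D0"
    by (rule cutvD[OF CUTv])
  have "(\<phi>, \<psi>) \<in> set bs2" using R(6) L(1) in_bx_pair by simp
  from rem_one[OF this] obtain bs2' where bs2': "set bs2' \<subseteq> set bs2" "mset bs2 = add_mset (\<phi>, \<psi>) (mset bs2')" by blast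
  let ?K2 = "add_mset (CDia \<phi>2 \<psi>2) (bx bs2' + dx ds2)"
  have e1: "add_mset (CDia \<phi>2 \<psi>2) (bx bs2 + dx ds2) = add_mset A ?K2" using bs2'(2) L(1) by (simp add: add_mset_commute)
  have e2: "add_mset \<psi>2 (sn bs2 + sn ds2) = add_mset \<psi> (add_mset \<psi>2 (sn bs2' + sn ds2))" using bs2'(2) by (simp add: add_mset_commute)
  have sub2: "?K2 \<subseteq># \<Gamma>'" using R(1) unfolding e1 by simp
  have bb1: "bnd M (bx bs1)" by (rule bnd_sub[OF b(1) L(2)])
  have bK2: "bnd M ?K2" by (rule bnd_sub[OF b(2) sub2])
  then have bb2: "bnd M (bx bs2')" and bd2: "bnd M (dx ds2)" and sD: "size (CDia \<phi>2 \<psi>2) < M" by simp_all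
  have s: "size \<phi> < M - 1" "size \<psi> < M - 1" "size \<phi>2 < M - 1" "size \<psi>2 < M - 1"
    using b(3) L(1) sD by auto
  have eq: "SDerivable {#\<phi>2#} (Some \<phi>)" "SDerivable {#\<phi>#} (Some \<phi>2)"
    using EQ_at[OF R(2) \<open>(\<phi>, \<psi>) \<in> set bs2\<close>] by auto
  have "EQv \<phi>2 bs1"
    by (rule EQv_trans[OF CUT EQ_EQv[OF L(3)] fst_bnd_bx[OF bb1] eq s(1) s(3)])
  moreover have "EQv \<phi>2 bs2'" using EQv_subset[OF EQ_EQv[OF R(2)] bs2'(1)] .
  ultimately have EQ: "EQv \<phi>2 (bs1 @ bs2')" by simp
  have EQd: "EQv \<phi>2 ds2" by (rule EQ_EQv[OF R(3)])
  have "SDerivable (sn bs1 + add_mset \<psi>2 (sn bs2' + sn ds2)) Dp"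
  proof (rule CUT)
    show "SDerivable (sn bs1) (Some \<psi>)" using L(4) by (rule SD_Dv)
    show "SDerivable (add_mset \<psi> (add_mset \<psi>2 (sn bs2' + sn ds2))) Dp" using R(4) unfolding e2 by (rule SD_Dv)
    show "bnd (M - 1) (sn bs1)" by (rule bnd_sn_bx[OF bb1])
    show "bnd (M - 1) (add_mset \<psi>2 (sn bs2' + sn ds2))" using bnd_sn_bx[OF bb2] bnd_sn_dx[OF bd2] s by simp
    show "bndo (M - 1) Dp" by (rule tgt_bndo[OF R(5) b(4)])
  qed (use s in simp_all)
  then have P: "SDerivable (add_mset \<psi>2 (sn (bs1 @ bs2') + sn ds2)) Dp" by (simp add: ac_simps)
  have "add_mset (CDia \<phi>2 \<psi>2) (bx (bs1 @ bs2') + dx ds2) = bx bs1 + ?K2" by (simp add: ac_simps)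
  also have "\<dots> \<subseteq># \<Gamma> + \<Gamma>'" by (rule subset_mset.add_mono[OF L(2) sub2])
  finally show ?thesis by (rule Dv_MR[OF _ EQ EQd P tgt_tgtv[OF R(5)]])
qed


lemma cut_dia_main:
  fixes A :: "'a fm"
  assumes CUTv: "cutv (M - 1) TYPE('a)"
    and L: "A = CDia \<eta> \<theta>" "add_mset (CDia \<phi>1 \<psi>1) (bx bs1 + dx ds1) \<subseteq># \<Gamma>" "EQ m \<phi>1 bs1" "EQ m \<phi>1 ds1"
      "SD m (add_mset \<psi>1 (sn bs1 + sn ds1)) (Some \<theta>)" "SD m {#\<phi>1#} (Some \<eta>)" "SD m {#\<eta>#} (Some \<phi>1)"
    and R: "add_mset (CDia \<phi>2 \<psi>2) (bx bs2 + dx ds2) \<subseteq># add_mset A \<Gamma>'" "EQ k \<phi>2 bs2" "EQ k \<phi>2 ds2"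
      "SD k (add_mset \<psi>2 (sn bs2 + sn ds2)) Dp" "tgt k \<phi>2 Dp D" "A = CDia \<phi>2 \<psi>2"
    and b: "bnd M \<Gamma>" "bnd M \<Gamma>'" "size A < M" "bndo M D"
  shows "SDerivable (\<Gamma> + \<Gamma>') D"
proof -
  have CUT: "\<And>\<Gamma>0 \<Gamma>0' (B::'a fm) D0. SDerivable \<Gamma>0 (Some B) \<Longrightarrow> SDerivable (add_mset B \<Gamma>0') D0 \<Longrightarrow> bnd (M - 1) \<Gamma>0
        \<Longrightarrow> bnd (M - 1) \<Gamma>0' \<Longrightarrow> size B < M - 1 \<Longrightarrow> bndo (M - 1) D0 \<Longrightarrow> SDerivable (\<Gamma>0 + \<Gamma>0') D0"
    by (rule cutvD[OF CUTv])
  have h: "\<phi>2 = \<eta>" "\<psi>2 = \<theta>" using L(1) R(6) by auto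
  let ?K1 = "add_mset (CDia \<phi>1 \<psi>1) (bx bs1 + dx ds1)"
  have sub2: "bx bs2 + dx ds2 \<subseteq># \<Gamma>'" using R(1) R(6) by simp
  have bK1: "bnd M ?K1" by (rule bnd_sub[OF b(1) L(2)])
  then have bb1: "bnd M (bx bs1)" and bd1: "bnd M (dx ds1)" and sD1: "size (CDia \<phi>1 \<psi>1) < M" by simp_all
  have bK2: "bnd M (bx bs2 + dx ds2)" by (rule bnd_sub[OF b(2) sub2])
  then have bb2: "bnd M (bx bs2)" and bd2: "bnd M (dx ds2)" by simp_all
  have s: "size \<phi>1 < M - 1" "size \<psi>1 < M - 1" "size \<eta> < M - 1" "size \<theta> < M - 1"
    using b(3) L(1) sD1 by auto
  have eq: "SDerivable {#\<phi>1#} (Some \<phi>2)" "SDerivable {#\<phi>2#} (Some \<phi>1)"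
    using L(6,7) h SD_Dv by auto
  have EQb: "EQv \<phi>1 (bs1 @ bs2)"
    using EQ_EQv[OF L(3)] EQv_trans[OF CUT EQ_EQv[OF R(2)] fst_bnd_bx[OF bb2] eq] s h by simp
  have EQd: "EQv \<phi>1 (ds1 @ ds2)"
    using EQ_EQv[OF L(4)] EQv_trans[OF CUT EQ_EQv[OF R(3)] fst_bnd_dx[OF bd2] eq] s h by simp
  have "SDerivable (add_mset \<psi>1 (sn bs1 + sn ds1) + (sn bs2 + sn ds2)) Dp"
  proof (rule CUT)
    show "SDerivable (add_mset \<psi>1 (sn bs1 + sn ds1)) (Some \<theta>)" using L(5) by (rule SD_Dv)
    show "SDerivable (add_mset \<theta> (sn bs2 + sn ds2)) Dp" using R(4) h by (simp add: SD_Dv)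
    show "bnd (M - 1) (add_mset \<psi>1 (sn bs1 + sn ds1))" using bnd_sn_bx[OF bb1] bnd_sn_dx[OF bd1] s by simp
    show "bnd (M - 1) (sn bs2 + sn ds2)" using bnd_sn_bx[OF bb2] bnd_sn_dx[OF bd2] by simp
    show "bndo (M - 1) Dp" by (rule tgt_bndo[OF R(5) b(4)])
  qed (use s in simp_all)
  then have P: "SDerivable (add_mset \<psi>1 (sn (bs1 @ bs2) + sn (ds1 @ ds2))) Dp" by (simp add: ac_simps)
  have T: "tgtv \<phi>1 Dp D"
  proof (cases "Dp = None")
    case True then show ?thesis by (simp add: tgtv_def)
  next
    case False
    then obtain \<eta>2 \<theta>2 where e: "Dp = Some \<theta>2" "D = Some (CDia \<eta>2 \<theta>2)" "SD k {#\<phi>2#} (Some \<eta>2)" "SD k {#\<eta>2#} (Some \<phi>2)"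
      using R(5) unfolding tgt_def by blast
    have s2: "size \<eta>2 < M - 1" using b(4) e(2) by simp
    have "SDerivable {#\<phi>1#} (Some \<eta>2)"
      using CUT[of "{#\<phi>1#}" \<phi>2 "{#}" "Some \<eta>2"] eq(1) SD_Dv[OF e(3)] s s2 h by simp
    moreover have "SDerivable {#\<eta>2#} (Some \<phi>1)"
      using CUT[of "{#\<eta>2#}" \<phi>2 "{#}" "Some \<phi>1"] eq(2) SD_Dv[OF e(4)] s s2 h by simp
    ultimately show ?thesis using e unfolding tgtv_def by blast
  qed
  have "add_mset (CDia \<phi>1 \<psi>1) (bx (bs1 @ bs2) + dx (ds1 @ ds2)) = ?K1 + (bx bs2 + dx ds2)" by (simp add: ac_simps)
  also have "\<dots> \<subseteq># \<Gamma> + \<Gamma>'" by (rule subset_mset.add_mono[OF L(2) sub2])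
  finally show ?thesis by (rule Dv_MR[OF _ EQb EQd P T])
qed

lemma cut_dia_ds:
  fixes A :: "'a fm"
  assumes CUTv: "cutv (M - 1) TYPE('a)"
    and L: "A = CDia \<eta> \<theta>" "add_mset (CDia \<phi>1 \<psi>1) (bx bs1 + dx ds1) \<subseteq># \<Gamma>" "EQ m \<phi>1 bs1" "EQ m \<phi>1 ds1"
      "SD m (add_mset \<psi>1 (sn bs1 + sn ds1)) (Some \<theta>)" "SD m {#\<phi>1#} (Some \<eta>)" "SD m {#\<eta>#} (Some \<phi>1)"
    and R: "add_mset (CDia \<phi>2 \<psi>2) (bx bs2 + dx ds2) \<subseteq># add_mset A \<Gamma>'" "EQ k \<phi>2 bs2" "EQ k \<phi>2 ds2"
      "SD k (add_mset \<psi>2 (sn bs2 + sn ds2)) Dp" "tgt k \<phi>2 Dp D" "A \<in># dx ds2"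
    and b: "bnd M \<Gamma>" "bnd M \<Gamma>'" "size A < M" "bndo M D"
  shows "SDerivable (\<Gamma> + \<Gamma>') D"
proof -
  have CUT: "\<And>\<Gamma>0 \<Gamma>0' (B::'a fm) D0. SDerivable \<Gamma>0 (Some B) \<Longrightarrow> SDerivable (add_mset B \<Gamma>0') D0 \<Longrightarrow> bnd (M - 1) \<Gamma>0
        \<Longrightarrow> bnd (M - 1) \<Gamma>0' \<Longrightarrow> size B < M - 1 \<Longrightarrow> bndo (M - 1) D0 \<Longrightarrow> SDerivable (\<Gamma>0 + \<Gamma>0') D0"
    by (rule cutvD[OF CUTv])
  have "(\<eta>, \<theta>) \<in> set ds2" using R(6) L(1) in_dx_pair by simp
  from rem_one[OF this] obtain ds2' where ds2': "set ds2' \<subseteq> set ds2" "mset ds2 = add_mset (\<eta>, \<theta>) (mset ds2')" by blast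
  let ?K1 = "add_mset (CDia \<phi>1 \<psi>1) (bx bs1 + dx ds1)"
  let ?K2 = "add_mset (CDia \<phi>2 \<psi>2) (bx bs2 + dx ds2')"
  have e1: "add_mset (CDia \<phi>2 \<psi>2) (bx bs2 + dx ds2) = add_mset A ?K2" using ds2'(2) L(1) by (simp add: add_mset_commute)
  have e2: "add_mset \<psi>2 (sn bs2 + sn ds2) = add_mset \<theta> (add_mset \<psi>2 (sn bs2 + sn ds2'))" using ds2'(2) by (simp add: add_mset_commute)
  have sub2: "?K2 \<subseteq># \<Gamma>'" using R(1) unfolding e1 by simp
  have bK1: "bnd M ?K1" by (rule bnd_sub[OF b(1) L(2)])
  then have bb1: "bnd M (bx bs1)" and bd1: "bnd M (dx ds1)" and sD1: "size (CDia \<phi>1 \<psi>1) < M" by simp_all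
  have bK2: "bnd M ?K2" by (rule bnd_sub[OF b(2) sub2])
  then have bb2: "bnd M (bx bs2)" and bd2: "bnd M (dx ds2')" and sD2: "size (CDia \<phi>2 \<psi>2) < M" by simp_all
  have s: "size \<phi>1 < M - 1" "size \<psi>1 < M - 1" "size \<eta> < M - 1" "size \<theta> < M - 1" "size \<phi>2 < M - 1" "size \<psi>2 < M - 1"
    using b(3) L(1) sD1 sD2 by auto
  have eq2: "SDerivable {#\<phi>2#} (Some \<eta>)" "SDerivable {#\<eta>#} (Some \<phi>2)"
    using EQ_at[OF R(3) \<open>(\<eta>, \<theta>) \<in> set ds2\<close>] by auto
  have eq21: "SDerivable {#\<phi>2#} (Some \<phi>1)"
    using CUT[of "{#\<phi>2#}" \<eta> "{#}" "Some \<phi>1"] eq2(1) SD_Dv[OF L(7)] s by simp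
  have eq12: "SDerivable {#\<phi>1#} (Some \<phi>2)"
    using CUT[of "{#\<phi>1#}" \<eta> "{#}" "Some \<phi>2"] eq2(2) SD_Dv[OF L(6)] s by simp
  have EQb: "EQv \<phi>2 (bs1 @ bs2)"
    using EQv_trans[OF CUT EQ_EQv[OF L(3)] fst_bnd_bx[OF bb1] eq21 eq12] EQ_EQv[OF R(2)] s by simp
  have "EQv \<phi>2 ds1" using EQv_trans[OF CUT EQ_EQv[OF L(4)] fst_bnd_dx[OF bd1] eq21 eq12] s by simp
  moreover have "EQv \<phi>2 ds2'" using EQv_subset[OF EQ_EQv[OF R(3)] ds2'(1)] .
  ultimately have EQd: "EQv \<phi>2 ((\<phi>1, \<psi>1) # ds1 @ ds2')" using eq21 eq12 by simp
  have "SDerivable (add_mset \<psi>1 (sn bs1 + sn ds1) + add_mset \<psi>2 (sn bs2 + sn ds2')) Dp"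
  proof (rule CUT)
    show "SDerivable (add_mset \<psi>1 (sn bs1 + sn ds1)) (Some \<theta>)" using L(5) by (rule SD_Dv)
    show "SDerivable (add_mset \<theta> (add_mset \<psi>2 (sn bs2 + sn ds2'))) Dp" using R(4) unfolding e2 by (rule SD_Dv)
    show "bnd (M - 1) (add_mset \<psi>1 (sn bs1 + sn ds1))" using bnd_sn_bx[OF bb1] bnd_sn_dx[OF bd1] s by simp
    show "bnd (M - 1) (add_mset \<psi>2 (sn bs2 + sn ds2'))" using bnd_sn_bx[OF bb2] bnd_sn_dx[OF bd2] s by simp
    show "bndo (M - 1) Dp" by (rule tgt_bndo[OF R(5) b(4)])
  qed (use s in simp_all)
  then have P: "SDerivable (add_mset \<psi>2 (sn (bs1 @ bs2) + sn ((\<phi>1, \<psi>1) # ds1 @ ds2'))) Dp"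
    by (simp add: ac_simps add_mset_commute)
  have "add_mset (CDia \<phi>2 \<psi>2) (bx (bs1 @ bs2) + dx ((\<phi>1, \<psi>1) # ds1 @ ds2')) = ?K1 + ?K2"
    by (simp add: ac_simps add_mset_commute)
  also have "\<dots> \<subseteq># \<Gamma> + \<Gamma>'" by (rule subset_mset.add_mono[OF L(2) sub2])
  finally show ?thesis by (rule Dv_MR[OF _ EQb EQd P tgt_tgtv[OF R(5)]])
qed


lemma cut_step:
  fixes A :: "'a fm"
  assumes CUTv: "cutv (M - 1) TYPE('a)"
    and IHk: "\<And>\<Gamma>0 \<Gamma>0' (B::'a fm) D0 m1 m2. size B < size A \<Longrightarrow> cut_ok M \<Gamma>0 \<Gamma>0' B D0 m1 m2"
    and IHh: "\<And>\<Gamma>0 \<Gamma>0' (D0::'a fm option) m1 m2. m1 + m2 < n1 + n2 \<Longrightarrow> cut_ok M \<Gamma>0 \<Gamma>0' A D0 m1 m2"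
    and L: "SD n1 \<Gamma> (Some A)" and R: "SD n2 (add_mset A \<Gamma>') D"
    and b: "bnd M \<Gamma>" "bnd M \<Gamma>'" "size A < M" "bndo M D"
  shows "SDerivable (\<Gamma> + \<Gamma>') D"
  using R
proof (cases rule: SD_elim)
  case (init p \<Gamma>0)
  show ?thesis
  proof (cases "A = Atom p")
    case True
    have "SD n1 (\<Gamma> + \<Gamma>') (Some A)" using L by (rule SD_weak_add)
    then show ?thesis using True init(2) by (simp add: SD_Dv)
  next
    case False
    have "Atom p \<in># \<Gamma>'" by (rule insert_noteq_member[OF init(1) False])
    then show ?thesis using init(2) by (simp add: Dv_init)
  qed
next
  case botL
  show ?thesis
  proof (cases "A = Bot")
    case True
    show ?thesis
      by (rule left_analysis[OF L R IHh b]) (use True in simp_all)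
  next
    case False
    then have "Bot \<in># \<Gamma>'" using botL by simp
    then show ?thesis by (simp add: Dv_botL)
  qed
next
  case (andL k B C \<Gamma>0)
  from add_split[OF andL(2)] show ?thesis
  proof (elim disjE exE conjE)
    assume Aeq: "A = And B C" and G: "\<Gamma>' = \<Gamma>0"
    show ?thesis
    proof (rule left_analysis[OF L R IHh b])
      fix m B' C' assume "n1 = Suc m" "A = And B' C'" "SD m \<Gamma> (Some B')" "SD m \<Gamma> (Some C')"
      then show ?thesis using cut_and[OF IHk Aeq _ _ _ b] andL(3) G Aeq by auto
    qed (use Aeq in simp_all)
  next
    fix K assume K: "\<Gamma>' = add_mset (And B C) K" "\<Gamma>0 = add_mset A K"
    have "SD k (add_mset A (add_mset B (add_mset C K))) D" using andL(3) K by (simp add: add_mset_commute)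
    then have "SDerivable (\<Gamma> + add_mset B (add_mset C K)) D"
      using IHh[of n1 k \<Gamma> "add_mset B (add_mset C K)" D] L b K andL(1) unfolding cut_ok_def by simp
    then have "SDerivable (add_mset B (add_mset C (\<Gamma> + K))) D" by simp
    then have "SDerivable (add_mset (And B C) (\<Gamma> + K)) D" by (rule Dv_andL)
    then show ?thesis using K by simp
  qed
next
  case (andR k B C)
  have "SDerivable (\<Gamma> + \<Gamma>') (Some B)" "SDerivable (\<Gamma> + \<Gamma>') (Some C)"
    using IHh[of n1 k \<Gamma> \<Gamma>' "Some B"] IHh[of n1 k \<Gamma> \<Gamma>' "Some C"] L b andR unfolding cut_ok_def by simp_all
  then show ?thesis using andR(2) by (simp add: Dv_andR)
next
  case (orL k B C \<Gamma>0)
  from add_split[OF orL(2)] show ?thesis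
  proof (elim disjE exE conjE)
    assume Aeq: "A = Or B C" and G: "\<Gamma>' = \<Gamma>0"
    show ?thesis
    proof (rule left_analysis[OF L R IHh b])
      fix m B' C' assume "n1 = Suc m" "A = Or B' C'" "SD m \<Gamma> (Some B')"
      then show ?thesis using cut_or[OF IHk _ _ _ b, of B m k] orL(3) G Aeq by auto
    next
      fix m B' C' assume "n1 = Suc m" "A = Or B' C'" "SD m \<Gamma> (Some C')"
      then show ?thesis using cut_or[OF IHk _ _ _ b, of C m k] orL(4) G Aeq by auto
    qed (use Aeq in simp_all)
  next
    fix K assume K: "\<Gamma>' = add_mset (Or B C) K" "\<Gamma>0 = add_mset A K"
    have "SD k (add_mset A (add_mset B K)) D" "SD k (add_mset A (add_mset C K)) D"
      using orL(3,4) K by (simp_all add: add_mset_commute)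
    then have "SDerivable (\<Gamma> + add_mset B K) D" "SDerivable (\<Gamma> + add_mset C K) D"
      using IHh[of n1 k \<Gamma> "add_mset B K" D] IHh[of n1 k \<Gamma> "add_mset C K" D] L b K orL(1) unfolding cut_ok_def by simp_all
    then have "SDerivable (add_mset B (\<Gamma> + K)) D" "SDerivable (add_mset C (\<Gamma> + K)) D" by simp_all
    then have "SDerivable (add_mset (Or B C) (\<Gamma> + K)) D" by (rule Dv_orL)
    then show ?thesis using K by simp
  qed
next
  case (orR1 k B C)
  have "SDerivable (\<Gamma> + \<Gamma>') (Some B)"
    using IHh[of n1 k \<Gamma> \<Gamma>' "Some B"] L b orR1 unfolding cut_ok_def by simp
  then show ?thesis using orR1(2) by (simp add: Dv_orR1)
next
  case (orR2 k B C)
  have "SDerivable (\<Gamma> + \<Gamma>') (Some C)"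
    using IHh[of n1 k \<Gamma> \<Gamma>' "Some C"] L b orR2 unfolding cut_ok_def by simp
  then show ?thesis using orR2(2) by (simp add: Dv_orR2)
next
  case (impR k B C)
  have "SD k (add_mset A (add_mset B \<Gamma>')) (Some C)" using impR(3) by (simp add: add_mset_commute)
  then have "SDerivable (\<Gamma> + add_mset B \<Gamma>') (Some C)"
    using IHh[of n1 k \<Gamma> "add_mset B \<Gamma>'" "Some C"] L b impR unfolding cut_ok_def by simp
  then have "SDerivable (add_mset B (\<Gamma> + \<Gamma>')) (Some C)" by simp
  then show ?thesis using impR(2) by (simp add: Dv_impR)
next
  case (impL k B C \<Gamma>0)
  from add_split[OF impL(2)] show ?thesis
  proof (elim disjE exE conjE)
    assume Aeq: "A = Imp B C" and G: "\<Gamma>' = \<Gamma>0"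
    have R1: "SDerivable (\<Gamma> + \<Gamma>') (Some B)"
      using IHh[of n1 k \<Gamma> \<Gamma>' "Some B"] L b impL(1,3) G Aeq unfolding cut_ok_def by simp
    show ?thesis
    proof (rule left_analysis[OF L R IHh b])
      fix m B' C' assume "n1 = Suc m" "A = Imp B' C'" "SD m (add_mset B' \<Gamma>) (Some C')"
      then show ?thesis using cut_imp[OF IHk Aeq _ R1 _ b, of m k] impL(4) G Aeq by auto
    qed (use Aeq in simp_all)
  next
    fix K assume K: "\<Gamma>' = add_mset (Imp B C) K" "\<Gamma>0 = add_mset A K"
    have "SD k (add_mset A (add_mset (Imp B C) K)) (Some B)" "SD k (add_mset A (add_mset C K)) D"
      using impL(3,4) K by (simp_all add: add_mset_commute)
    then have "SDerivable (\<Gamma> + add_mset (Imp B C) K) (Some B)" "SDerivable (\<Gamma> + add_mset C K) D"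
      using IHh[of n1 k \<Gamma> "add_mset (Imp B C) K" "Some B"] IHh[of n1 k \<Gamma> "add_mset C K" D] L b K impL(1)
      unfolding cut_ok_def by simp_all
    then have "SDerivable (add_mset (Imp B C) (\<Gamma> + K)) (Some B)" "SDerivable (add_mset C (\<Gamma> + K)) D" by simp_all
    then have "SDerivable (add_mset (Imp B C) (\<Gamma> + K)) D" by (rule Dv_impL)
    then show ?thesis using K by simp
  qed
next
  case (box k)
  then obtain \<phi>2 \<psi>2 bs2 where o: "D = Some (CBox \<phi>2 \<psi>2)" "bx bs2 \<subseteq># add_mset A \<Gamma>'" "EQ k \<phi>2 bs2" "SD k (sn bs2) (Some \<psi>2)"
    unfolding BRr_def by blast
  show ?thesis
  proof (cases "A \<in># bx bs2")
    case True
    then obtain \<phi> \<psi> where Aeq: "A = CBox \<phi> \<psi>" using in_bx by blast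
    show ?thesis
    proof (rule left_analysis[OF L R IHh b])
      fix m \<phi>' \<psi>' bs assume "n1 = Suc m" "A = CBox \<phi>' \<psi>'" "bx bs \<subseteq># \<Gamma>" "EQ m \<phi>' bs" "SD m (sn bs) (Some \<psi>')"
      then show ?thesis using cut_box_box[OF CUTv _ _ _ _ o(1-4) True b] by blast
    qed (use Aeq in simp_all)
  next
    case False
    have "bx bs2 \<subseteq># \<Gamma>'" by (rule sub_notin[OF o(2) False])
    then have "bx bs2 \<subseteq># \<Gamma> + \<Gamma>'" by (rule subset_mset.order_trans) simp
    then have "BRr k (\<Gamma> + \<Gamma>') D" by (rule BRrI[OF o(1) _ o(3,4)])
    then show ?thesis by (rule SD_Dv[OF BRr_SD])
  qed
next
  case (mr k)
  then obtain \<phi>2 \<psi>2 bs2 ds2 Dp where o: "add_mset (CDia \<phi>2 \<psi>2) (bx bs2 + dx ds2) \<subseteq># add_mset A \<Gamma>'"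
      "EQ k \<phi>2 bs2" "EQ k \<phi>2 ds2" "SD k (add_mset \<psi>2 (sn bs2 + sn ds2)) Dp" "tgt k \<phi>2 Dp D"
    unfolding MRr_def by blast
  show ?thesis
  proof (cases "A = CDia \<phi>2 \<psi>2")
    case True
    show ?thesis
    proof (rule left_analysis[OF L R IHh b])
      fix m \<phi> \<psi> bs ds \<eta> \<theta> assume "n1 = Suc m" "A = CDia \<eta> \<theta>" "add_mset (CDia \<phi> \<psi>) (bx bs + dx ds) \<subseteq># \<Gamma>"
        "EQ m \<phi> bs" "EQ m \<phi> ds" "SD m (add_mset \<psi> (sn bs + sn ds)) (Some \<theta>)" "SD m {#\<phi>#} (Some \<eta>)" "SD m {#\<eta>#} (Some \<phi>)"
      then show ?thesis using cut_dia_main[OF CUTv _ _ _ _ _ _ _ o True b] by blast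
    qed (use True in simp_all)
  next
    case notmain: False
    show ?thesis
    proof (cases "A \<in># bx bs2")
      case True
      then obtain \<phi> \<psi> where Aeq: "A = CBox \<phi> \<psi>" using in_bx by blast
      show ?thesis
      proof (rule left_analysis[OF L R IHh b])
        fix m \<phi>' \<psi>' bs assume "n1 = Suc m" "A = CBox \<phi>' \<psi>'" "bx bs \<subseteq># \<Gamma>" "EQ m \<phi>' bs" "SD m (sn bs) (Some \<psi>')"
        then show ?thesis using cut_box_MR[OF CUTv _ _ _ _ o True b] by blast
      qed (use Aeq in simp_all)
    next
      case notbx: False
      show ?thesis
      proof (cases "A \<in># dx ds2")
        case True
        then obtain \<eta>0 \<theta>0 where Aeq: "A = CDia \<eta>0 \<theta>0" using in_dx by blast
        show ?thesis
        proof (rule left_analysis[OF L R IHh b])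
          fix m \<phi> \<psi> bs ds \<eta> \<theta> assume "n1 = Suc m" "A = CDia \<eta> \<theta>" "add_mset (CDia \<phi> \<psi>) (bx bs + dx ds) \<subseteq># \<Gamma>"
            "EQ m \<phi> bs" "EQ m \<phi> ds" "SD m (add_mset \<psi> (sn bs + sn ds)) (Some \<theta>)" "SD m {#\<phi>#} (Some \<eta>)" "SD m {#\<eta>#} (Some \<phi>)"
          then show ?thesis using cut_dia_ds[OF CUTv _ _ _ _ _ _ _ o True b] by blast
        qed (use Aeq in simp_all)
      next
        case False
        have "A \<notin># add_mset (CDia \<phi>2 \<psi>2) (bx bs2 + dx ds2)" using notmain notbx False by simp
        then have "add_mset (CDia \<phi>2 \<psi>2) (bx bs2 + dx ds2) \<subseteq># \<Gamma>'" by (rule sub_notin[OF o(1)])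
        then have "add_mset (CDia \<phi>2 \<psi>2) (bx bs2 + dx ds2) \<subseteq># \<Gamma> + \<Gamma>'" by (rule subset_mset.order_trans) simp
        then have "MRr k (\<Gamma> + \<Gamma>') D" by (rule MRrI[OF _ o(2-5)])
        then show ?thesis by (rule SD_Dv[OF MRr_SD])
      qed
    qed
  qed
qed


definition cutR :: "((nat \<times> nat \<times> nat) \<times> (nat \<times> nat \<times> nat)) set" where
  "cutR = less_than <*lex*> (less_than <*lex*> less_than)"

lemma wf_cutR: "wf cutR"
  unfolding cutR_def by (intro wf_lex_prod wf_less_than)

lemma cut_main_aux:
  "\<forall>M \<Gamma> \<Gamma>' (A::'a fm) D n1 n2. t = (M, size A, n1 + n2) \<longrightarrow> cut_ok M \<Gamma> \<Gamma>' A D n1 n2"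
proof (induction t rule: wf_induct[OF wf_cutR])
  case (1 t)
  show ?case
  proof (intro allI impI)
    fix M \<Gamma> \<Gamma>' and A :: "'a fm" and D n1 n2
    assume t: "t = (M, size A, n1 + n2)"
    have IH: "\<And>M' \<Gamma>0 \<Gamma>0' (B::'a fm) D0 m1 m2. ((M', size B, m1 + m2), t) \<in> cutR \<Longrightarrow> cut_ok M' \<Gamma>0 \<Gamma>0' B D0 m1 m2"
      using 1 by blast
    show "cut_ok M \<Gamma> \<Gamma>' A D n1 n2"
      unfolding cut_ok_def
    proof (intro impI)
      assume L: "SD n1 \<Gamma> (Some A)" and R: "SD n2 (add_mset A \<Gamma>') D"
        and b: "bnd M \<Gamma>" "bnd M \<Gamma>'" "size A < M" "bndo M D"
      have CUTv: "cutv (M - 1) TYPE('a)"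
        unfolding cutv_def
      proof (intro allI impI)
        fix \<Gamma>0 \<Gamma>0' and B :: "'a fm" and D0
        assume a: "SDerivable \<Gamma>0 (Some B)" "SDerivable (add_mset B \<Gamma>0') D0" "bnd (M - 1) \<Gamma>0"
          "bnd (M - 1) \<Gamma>0'" "size B < M - 1" "bndo (M - 1) D0"
        obtain m1 m2 where m: "SD m1 \<Gamma>0 (Some B)" "SD m2 (add_mset B \<Gamma>0') D0"
          using a(1,2) unfolding SDerivable_def by blast
        have "((M - 1, size B, m1 + m2), t) \<in> cutR" using t b(3) by (simp add: cutR_def)
        then show "SDerivable (\<Gamma>0 + \<Gamma>0') D0" using IH m a(3-6) unfolding cut_ok_def by blast
      qed
      have IHk: "\<And>\<Gamma>0 \<Gamma>0' (B::'a fm) D0 m1 m2. size B < size A \<Longrightarrow> cut_ok M \<Gamma>0 \<Gamma>0' B D0 m1 m2"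
        using IH t by (simp add: cutR_def)
      have IHh: "\<And>\<Gamma>0 \<Gamma>0' (D0::'a fm option) m1 m2. m1 + m2 < n1 + n2 \<Longrightarrow> cut_ok M \<Gamma>0 \<Gamma>0' A D0 m1 m2"
        using IH t by (simp add: cutR_def)
      show "SDerivable (\<Gamma> + \<Gamma>') D" by (rule cut_step[OF CUTv IHk IHh L R b])
    qed
  qed
qed

lemma cut_adm:
  fixes \<phi> :: "'a fm"
  assumes "SDerivable \<Gamma> (Some \<phi>)" "SDerivable (add_mset \<phi> \<Gamma>') D"
  shows "SDerivable (\<Gamma> + \<Gamma>') D"
proof -
  obtain n1 n2 where n: "SD n1 \<Gamma> (Some \<phi>)" "SD n2 (add_mset \<phi> \<Gamma>') D"
    using assms unfolding SDerivable_def by blast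
  let ?S = "size ` (set_mset (add_mset \<phi> (\<Gamma> + \<Gamma>')) \<union> set_option D)"
  define M where "M = Suc (Max ?S)"
  have fin: "finite ?S" by simp
  have le: "size x < M" if "x \<in> set_mset (add_mset \<phi> (\<Gamma> + \<Gamma>')) \<union> set_option D" for x
  proof -
    have "size x \<in> ?S" using that by blast
    then have "size x \<le> Max ?S" by (rule Max_ge[OF fin])
    then show ?thesis unfolding M_def by simp
  qed
  have b: "bnd M \<Gamma>" "bnd M \<Gamma>'" "size \<phi> < M" "bndo M D"
    unfolding bnd_def bndo_def using le by auto
  show ?thesis using cut_main_aux[of "(M, size \<phi>, n1 + n2)"] n b unfolding cut_ok_def by blast
qed


section \<open>Hilbert system with hypotheses\<close>

inductive Hy :: "'a fm set \<Rightarrow> 'a fm \<Rightarrow> bool" for H where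
  hyp: "A \<in> H \<Longrightarrow> Hy H A"
| ax: "ConstCKCEM A \<Longrightarrow> Hy H A"
| mp: "Hy H (Imp A B) \<Longrightarrow> Hy H A \<Longrightarrow> Hy H B"

lemma Hy_mono: "Hy H A \<Longrightarrow> H \<subseteq> H' \<Longrightarrow> Hy H' A"
  by (induction rule: Hy.induct) (auto intro: Hy.intros)

lemma Hy_subst: "Hy H A \<Longrightarrow> (\<And>h. h \<in> H \<Longrightarrow> Hy H' h) \<Longrightarrow> Hy H' A"
  by (induction rule: Hy.induct) (auto intro: Hy.intros)

lemma H_id: "ConstCKCEM (Imp A A)"
proof -
  have 1: "ConstCKCEM (Imp (Imp A (Imp (Imp A A) A)) (Imp (Imp A (Imp A A)) (Imp A A)))" by (rule A2)
  have 2: "ConstCKCEM (Imp A (Imp (Imp A A) A))" by (rule A1)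
  have 3: "ConstCKCEM (Imp (Imp A (Imp A A)) (Imp A A))" by (rule MP[OF 1 2])
  show ?thesis by (rule MP[OF 3 A1])
qed

lemma Hy_ded: "Hy (insert A H) B \<Longrightarrow> Hy H (Imp A B)"
proof (induction rule: Hy.induct)
  case (hyp B)
  then show ?case
  proof
    assume "B = A" then show ?thesis using H_id by (auto intro: Hy.ax)
  next
    assume "B \<in> H" then show ?thesis by (meson A1 Hy.ax Hy.hyp Hy.mp)
  qed
next
  case (ax B) then show ?case by (meson A1 Hy.ax Hy.mp)
next
  case (mp B C) then show ?case by (meson A2 Hy.ax Hy.mp)
qed

lemma Hy_empty: "Hy {} A \<Longrightarrow> ConstCKCEM A"
  by (induction rule: Hy.induct) (auto intro: MP)

lemma Hy_ax_mp: "ConstCKCEM (Imp A B) \<Longrightarrow> Hy H A \<Longrightarrow> Hy H B"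
  by (meson Hy.ax Hy.mp)

lemma Hy_ax_mp2: "ConstCKCEM (Imp A (Imp B C)) \<Longrightarrow> Hy H A \<Longrightarrow> Hy H B \<Longrightarrow> Hy H C"
  by (meson Hy.ax Hy.mp)

lemma Hy_andI: "Hy H A \<Longrightarrow> Hy H B \<Longrightarrow> Hy H (And A B)"
  using Hy_ax_mp2[OF A5] .

lemma Hy_andE1: "Hy H (And A B) \<Longrightarrow> Hy H A"
  using Hy_ax_mp[OF A3] .

lemma Hy_andE2: "Hy H (And A B) \<Longrightarrow> Hy H B"
  using Hy_ax_mp[OF A4] .

lemma Hy_botE: "Hy H Bot \<Longrightarrow> Hy H A"
  using Hy_ax_mp[OF A9] .

lemma Hy_top: "Hy H Top"
  unfolding Top_def Neg_def by (rule Hy_ded) (simp add: Hy.hyp)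

lemma Hy_cut: "Hy H A \<Longrightarrow> Hy (insert A H) B \<Longrightarrow> Hy H B"
  using Hy_ded Hy.mp by blast

lemma Hy_orE: "Hy H (Or A B) \<Longrightarrow> Hy (insert A H) C \<Longrightarrow> Hy (insert B H) C \<Longrightarrow> Hy H C"
  by (meson A8 Hy.ax Hy.mp Hy_ded)

lemma Hy_iffI: "Hy H (Imp A B) \<Longrightarrow> Hy H (Imp B A) \<Longrightarrow> Hy H (Iff A B)"
  unfolding Iff_def by (rule Hy_andI)

lemma C_iff: "Hy {A} B \<Longrightarrow> Hy {B} A \<Longrightarrow> ConstCKCEM (Iff A B)"
  by (intro Hy_empty Hy_iffI Hy_ded) simp_all

lemma C_iff_imp1: "ConstCKCEM (Iff A B) \<Longrightarrow> Hy H A \<Longrightarrow> Hy H B"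
  unfolding Iff_def by (meson Hy.ax Hy.mp Hy_andE1)

lemma C_iff_imp2: "ConstCKCEM (Iff A B) \<Longrightarrow> Hy H B \<Longrightarrow> Hy H A"
  unfolding Iff_def by (meson Hy.ax Hy.mp Hy_andE2)

lemma box_mono: assumes "Hy {A} B" shows "Hy {CBox \<phi> A} (CBox \<phi> B)"
proof -
  have "Hy {A} (And A B)" using assms by (intro Hy_andI) (simp_all add: Hy.hyp)
  moreover have "Hy {And A B} A" by (rule Hy_andE1[of _ A B]) (simp add: Hy.hyp)
  ultimately have "ConstCKCEM (Iff A (And A B))" by (rule C_iff)
  then have "ConstCKCEM (Iff (CBox \<phi> A) (CBox \<phi> (And A B)))" by (rule RC_Box)
  then have "Hy {CBox \<phi> A} (CBox \<phi> (And A B))" by (rule C_iff_imp1) (simp add: Hy.hyp)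
  then have "Hy {CBox \<phi> A} (And (CBox \<phi> A) (CBox \<phi> B))" by (rule Hy_ax_mp[OF CM_Box])
  then show ?thesis by (rule Hy_andE2)
qed

lemma box_lemma:
  assumes "Hy (set (map snd bs)) \<psi>" "\<forall>p\<in>set bs. ConstCKCEM (Iff (fst p) \<phi>)"
  shows "Hy ((\<lambda>(\<rho>, \<sigma>). CBox \<rho> \<sigma>) ` set bs) (CBox \<phi> \<psi>)"
  using assms
proof (induction bs arbitrary: \<psi>)
  case Nil
  then have c: "ConstCKCEM \<psi>" by (simp add: Hy_empty)
  have "Hy {} (Imp Top \<psi>)" using c by (meson A1 Hy.ax Hy_ax_mp)
  moreover have "Hy {} (Imp \<psi> Top)" using Hy_top by (meson A1 Hy_ax_mp)
  ultimately have "ConstCKCEM (Iff Top \<psi>)" by (intro Hy_empty Hy_iffI)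
  then have "ConstCKCEM (Iff (CBox \<phi> Top) (CBox \<phi> \<psi>))" by (rule RC_Box)
  then have "Hy {} (CBox \<phi> \<psi>)" by (rule C_iff_imp1) (rule Hy.ax[OF CN_Box])
  then show ?case by simp
next
  case (Cons p bs)
  obtain \<rho> \<sigma> where p: "p = (\<rho>, \<sigma>)" by fastforce
  let ?H = "(\<lambda>(\<rho>, \<sigma>). CBox \<rho> \<sigma>) ` set bs"
  have "Hy (insert \<sigma> (set (map snd bs))) \<psi>" using Cons.prems(1) p by simp
  then have "Hy (set (map snd bs)) (Imp \<sigma> \<psi>)" by (rule Hy_ded)
  then have 1: "Hy ?H (CBox \<phi> (Imp \<sigma> \<psi>))" using Cons.IH Cons.prems(2) by simp
  have "ConstCKCEM (Iff \<rho> \<phi>)" using Cons.prems(2) p by simp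
  then have "ConstCKCEM (Iff (CBox \<rho> \<sigma>) (CBox \<phi> \<sigma>))" by (rule RA_Box)
  then have 2: "Hy (insert (CBox \<rho> \<sigma>) ?H) (CBox \<phi> \<sigma>)" by (rule C_iff_imp1) (simp add: Hy.hyp)
  have "Hy (insert (CBox \<rho> \<sigma>) ?H) (And (CBox \<phi> \<sigma>) (CBox \<phi> (Imp \<sigma> \<psi>)))"
    using 2 Hy_mono[OF 1, of "insert (CBox \<rho> \<sigma>) ?H"] by (intro Hy_andI) auto
  then have 3: "Hy (insert (CBox \<rho> \<sigma>) ?H) (CBox \<phi> (And \<sigma> (Imp \<sigma> \<psi>)))" by (rule Hy_ax_mp[OF CC_Box])
  have "Hy {And \<sigma> (Imp \<sigma> \<psi>)} \<psi>"
    by (rule Hy.mp[of _ \<sigma>]) (auto intro: Hy_andE1 Hy_andE2 Hy.hyp)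
  then have "Hy {CBox \<phi> (And \<sigma> (Imp \<sigma> \<psi>))} (CBox \<phi> \<psi>)" by (rule box_mono)
  then have "Hy (insert (CBox \<rho> \<sigma>) ?H) (CBox \<phi> \<psi>)"
    using 3 by (meson Hy_cut Hy_mono empty_subsetI insert_mono)
  then show ?case using p by simp
qed


lemma dia_lemma:
  assumes "Hy (insert \<psi> (set (map snd bs) \<union> set (map snd ds))) \<theta>"
    "\<forall>p\<in>set bs. ConstCKCEM (Iff (fst p) \<phi>)" "\<forall>p\<in>set ds. ConstCKCEM (Iff (fst p) \<phi>)"
  shows "Hy (insert (CDia \<phi> \<psi>) ((\<lambda>(\<rho>, \<sigma>). CBox \<rho> \<sigma>) ` set bs \<union> (\<lambda>(\<rho>, \<sigma>). CDia \<rho> \<sigma>) ` set ds)) (CDia \<phi> \<theta>)"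
  using assms
proof (induction ds arbitrary: \<psi>)
  case Nil
  let ?B = "(\<lambda>(\<rho>, \<sigma>). CBox \<rho> \<sigma>) ` set bs"
  have "Hy (set (map snd bs)) (Imp \<psi> \<theta>)" using Nil.prems(1) by (intro Hy_ded) simp
  then have "Hy ?B (CBox \<phi> (Imp \<psi> \<theta>))" using box_lemma Nil.prems(2) by blast
  then have 1: "Hy (insert (CDia \<phi> \<psi>) ?B) (CBox \<phi> (Imp \<psi> \<theta>))" by (rule Hy_mono) blast
  have 2: "Hy (insert (CDia \<phi> \<psi>) ?B) (CDia \<phi> \<psi>)" by (simp add: Hy.hyp)
  show ?case using Hy_ax_mp2[OF CK_Dia 1 2] by simp
next
  case (Cons p ds)
  obtain \<xi> \<chi> where p: "p = (\<xi>, \<chi>)" by fastforce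
  let ?B = "(\<lambda>(\<rho>, \<sigma>). CBox \<rho> \<sigma>) ` set bs"
  let ?Ds = "(\<lambda>(\<rho>, \<sigma>). CDia \<rho> \<sigma>) ` set ds"
  let ?S = "set (map snd bs) \<union> set (map snd ds)"
  have "Hy (insert (And \<psi> \<chi>) ?S) \<theta>"
  proof (rule Hy_subst[OF Cons.prems(1)])
    fix h assume "h \<in> insert \<psi> (set (map snd bs) \<union> set (map snd (p # ds)))"
    then have "h = \<psi> \<or> h = \<chi> \<or> h \<in> ?S" using p by simp
    then consider "h = \<psi>" | "h = \<chi>" | "h \<in> ?S" by blast
    then show "Hy (insert (And \<psi> \<chi>) ?S) h"
    proof cases
      case 1
      have "Hy (insert (And \<psi> \<chi>) ?S) \<psi>" by (rule Hy_andE1[of _ _ \<chi>]) (simp add: Hy.hyp)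
      then show ?thesis using 1 by simp
    next
      case 2
      have "Hy (insert (And \<psi> \<chi>) ?S) \<chi>" by (rule Hy_andE2[of _ \<psi>]) (simp add: Hy.hyp)
      then show ?thesis using 2 by simp
    next
      case 3 then show ?thesis by (simp add: Hy.hyp)
    qed
  qed
  then have IH: "Hy (insert (CDia \<phi> (And \<psi> \<chi>)) (?B \<union> ?Ds)) (CDia \<phi> \<theta>)"
    using Cons.IH Cons.prems(2,3) by simp
  let ?G = "insert (CDia \<phi> \<psi>) (?B \<union> insert (CDia \<xi> \<chi>) ?Ds)"
  have "ConstCKCEM (Iff \<xi> \<phi>)" using Cons.prems(3) p by simp
  then have "ConstCKCEM (Iff (CDia \<xi> \<chi>) (CDia \<phi> \<chi>))" by (rule RA_Dia)
  then have 1: "Hy ?G (CDia \<phi> \<chi>)" by (rule C_iff_imp1) (simp add: Hy.hyp)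
  have 2: "Hy ?G (CDia \<phi> \<psi>)" by (simp add: Hy.hyp)
  have "Hy ?G (CDia \<phi> (And \<psi> \<chi>))" by (rule Hy_ax_mp[OF CEM_Dia]) (rule Hy_andI[OF 2 1])
  moreover have "Hy (insert (CDia \<phi> (And \<psi> \<chi>)) ?G) (CDia \<phi> \<theta>)" by (rule Hy_mono[OF IH]) blast
  ultimately have "Hy ?G (CDia \<phi> \<theta>)" by (rule Hy_cut)
  then show ?case using p by simp
qed

lemma EQ_sound:
  fixes \<phi> :: "'a fm"
  assumes "EQ m \<phi> bs" "\<And>Y (E::'a fm option). SD m Y E \<Longrightarrow> Hy (set_mset Y) (big_or E)"
  shows "\<forall>p\<in>set bs. ConstCKCEM (Iff (fst p) \<phi>)"
proof
  fix p assume "p \<in> set bs"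
  then have h: "SD m {#\<phi>#} (Some (fst p))" "SD m {#fst p#} (Some \<phi>)" using assms(1) unfolding EQ_def by auto
  have "Hy {\<phi>} (fst p)" "Hy {fst p} \<phi>" using assms(2)[OF h(1)] assms(2)[OF h(2)] by simp_all
  then show "ConstCKCEM (Iff (fst p) \<phi>)" by (intro C_iff)
qed

lemma SD_sound: "SD n X D \<Longrightarrow> Hy (set_mset X) (big_or D)"
proof (induction n arbitrary: X D rule: less_induct)
  case (less n)
  have IH: "\<And>m Y (E::'a fm option). m < n \<Longrightarrow> SD m Y E \<Longrightarrow> Hy (set_mset Y) (big_or E)" using less.IH by blast
  from less.prems show ?case
  proof (cases rule: SD_elim)
    case (init p \<Gamma>) then show ?thesis by (simp add: Hy.hyp)
  next
    case botL
    have "Hy (set_mset X) Bot" using botL by (simp add: Hy.hyp)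
    then show ?thesis by (rule Hy_botE)
  next
    case (andL m A B \<Gamma>)
    have "Hy (insert A (insert B (set_mset \<Gamma>))) (big_or D)" using IH[OF _ andL(3)] andL(1) by simp
    then have "Hy (insert (And A B) (set_mset \<Gamma>)) (big_or D)"
      by (rule Hy_subst) (auto intro: Hy.hyp Hy_andE1[of _ _ B] Hy_andE2[of _ A])
    then show ?thesis using andL(2) by simp
  next
    case (andR m A B)
    have "Hy (set_mset X) A" "Hy (set_mset X) B" using IH[OF _ andR(3)] IH[OF _ andR(4)] andR(1) by simp_all
    then show ?thesis using andR(2) by (simp add: Hy_andI)
  next
    case (orL m A B \<Gamma>)
    have "Hy (insert A (set_mset \<Gamma>)) (big_or D)" "Hy (insert B (set_mset \<Gamma>)) (big_or D)"
      using IH[OF _ orL(3)] IH[OF _ orL(4)] orL(1) by simp_all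
    then have h: "Hy (insert A (insert (Or A B) (set_mset \<Gamma>))) (big_or D)" "Hy (insert B (insert (Or A B) (set_mset \<Gamma>))) (big_or D)"
      by (auto elim: Hy_mono)
    have "Hy (insert (Or A B) (set_mset \<Gamma>)) (Or A B)" by (simp add: Hy.hyp)
    then have "Hy (insert (Or A B) (set_mset \<Gamma>)) (big_or D)" using h by (rule Hy_orE)
    then show ?thesis using orL(2) by simp
  next
    case (orR1 m A B)
    have "Hy (set_mset X) A" using IH[OF _ orR1(3)] orR1(1) by simp
    then show ?thesis using orR1(2) by (simp add: Hy_ax_mp[OF A6])
  next
    case (orR2 m A B)
    have "Hy (set_mset X) B" using IH[OF _ orR2(3)] orR2(1) by simp
    then show ?thesis using orR2(2) by (simp add: Hy_ax_mp[OF A7])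
  next
    case (impR m A B)
    have "Hy (insert A (set_mset X)) B" using IH[OF _ impR(3)] impR(1) by simp
    then show ?thesis using impR(2) by (simp add: Hy_ded)
  next
    case (impL m A B \<Gamma>)
    let ?H = "insert (Imp A B) (set_mset \<Gamma>)"
    have 1: "Hy ?H A" using IH[OF _ impL(3)] impL(1) by simp
    have 2: "Hy ?H B" by (rule Hy.mp[OF _ 1]) (simp add: Hy.hyp)
    have "Hy (insert B (set_mset \<Gamma>)) (big_or D)" using IH[OF _ impL(4)] impL(1) by simp
    then have "Hy ?H (big_or D)" by (rule Hy_subst) (auto intro: Hy.hyp 2)
    then show ?thesis using impL(2) by simp
  next
    case (box m)
    then obtain \<phi> \<psi> bs where o: "D = Some (CBox \<phi> \<psi>)" "bx bs \<subseteq># X" "EQ m \<phi> bs" "SD m (sn bs) (Some \<psi>)"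
      unfolding BRr_def by blast
    have IHm: "\<And>Y (E::'a fm option). SD m Y E \<Longrightarrow> Hy (set_mset Y) (big_or E)" using IH box(1) by blast
    have "Hy (set (map snd bs)) \<psi>" using IHm[OF o(4)] by simp
    then have "Hy ((\<lambda>(\<rho>, \<sigma>). CBox \<rho> \<sigma>) ` set bs) (CBox \<phi> \<psi>)" by (rule box_lemma[OF _ EQ_sound[OF o(3) IHm]])
    moreover have "(\<lambda>(\<rho>, \<sigma>). CBox \<rho> \<sigma>) ` set bs \<subseteq> set_mset X" using set_mset_mono[OF o(2)] by simp
    ultimately show ?thesis using o(1) by (auto elim: Hy_mono)
  next
    case (mr m)
    then obtain \<phi> \<psi> bs ds Dp where o: "add_mset (CDia \<phi> \<psi>) (bx bs + dx ds) \<subseteq># X" "EQ m \<phi> bs" "EQ m \<phi> ds"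
      "SD m (add_mset \<psi> (sn bs + sn ds)) Dp" "tgt m \<phi> Dp D"
      unfolding MRr_def by blast
    have IHm: "\<And>Y (E::'a fm option). SD m Y E \<Longrightarrow> Hy (set_mset Y) (big_or E)" using IH mr(1) by blast
    have "Hy (insert \<psi> (set (map snd bs) \<union> set (map snd ds))) (big_or Dp)" using IHm[OF o(4)] by simp
    then have "Hy (insert (CDia \<phi> \<psi>) ((\<lambda>(\<rho>, \<sigma>). CBox \<rho> \<sigma>) ` set bs \<union> (\<lambda>(\<rho>, \<sigma>). CDia \<rho> \<sigma>) ` set ds)) (CDia \<phi> (big_or Dp))"
      by (rule dia_lemma[OF _ EQ_sound[OF o(2) IHm] EQ_sound[OF o(3) IHm]])
    moreover have "insert (CDia \<phi> \<psi>) ((\<lambda>(\<rho>, \<sigma>). CBox \<rho> \<sigma>) ` set bs \<union> (\<lambda>(\<rho>, \<sigma>). CDia \<rho> \<sigma>) ` set ds) \<subseteq> set_mset X"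
      using set_mset_mono[OF o(1)] by simp
    ultimately have H: "Hy (set_mset X) (CDia \<phi> (big_or Dp))" by (rule Hy_mono)
    show ?thesis
    proof (cases "Dp = None")
      case True
      have "Hy (set_mset X) (Imp (CDia \<phi> Bot) Bot)" using CN_Dia[of \<phi>] unfolding Neg_def by (rule Hy.ax)
      then have "Hy (set_mset X) Bot" using H True by (auto intro: Hy.mp)
      then show ?thesis by (rule Hy_botE)
    next
      case False
      then obtain \<eta> \<theta> where e: "Dp = Some \<theta>" "D = Some (CDia \<eta> \<theta>)" "SD m {#\<phi>#} (Some \<eta>)" "SD m {#\<eta>#} (Some \<phi>)"
        using o(5) unfolding tgt_def by blast
      have "Hy {\<phi>} \<eta>" "Hy {\<eta>} \<phi>" using IHm[OF e(3)] IHm[OF e(4)] by simp_all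
      then have "ConstCKCEM (Iff \<phi> \<eta>)" by (rule C_iff)
      then have "ConstCKCEM (Iff (CDia \<phi> \<theta>) (CDia \<eta> \<theta>))" by (rule RA_Dia)
      then show ?thesis using H e by (auto intro: C_iff_imp1)
    qed
  qed
qed


section \<open>Completeness of the sequent calculus w.r.t. the Hilbert system\<close>

lemma Dv_iff: "SDerivable {#A#} (Some B) \<Longrightarrow> SDerivable {#B#} (Some A) \<Longrightarrow> SDerivable {#} (Some (Iff A B))"
  unfolding Iff_def by (intro Dv_andR Dv_impR) simp_all

lemma Dv_iff_split:
  assumes "SDerivable {#} (Some (Iff A B))"
  shows "SDerivable {#A#} (Some B)" "SDerivable {#B#} (Some A)"
proof -
  have "SDerivable (add_mset (Imp A B) {#Imp B A, A#}) (Some A)" using Dv_id[of A "{#Imp A B, Imp B A#}"]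
    by (simp add: add_mset_commute)
  moreover have "SDerivable (add_mset B {#Imp B A, A#}) (Some B)" by (rule Dv_id)
  ultimately have "SDerivable (add_mset (Imp A B) {#Imp B A, A#}) (Some B)" by (rule Dv_impL)
  then have "SDerivable (add_mset (Imp A B) (add_mset (Imp B A) {#A#})) (Some B)" by simp
  then have "SDerivable (add_mset (Iff A B) {#A#}) (Some B)" unfolding Iff_def by (rule Dv_andL)
  from cut_adm[OF assms this] show "SDerivable {#A#} (Some B)" by simp
  have "SDerivable (add_mset (Imp B A) {#Imp A B, B#}) (Some B)" using Dv_id[of B "{#Imp B A, Imp A B#}"]
    by (simp add: add_mset_commute)
  moreover have "SDerivable (add_mset A {#Imp A B, B#}) (Some A)" by (rule Dv_id)
  ultimately have "SDerivable (add_mset (Imp B A) {#Imp A B, B#}) (Some A)" by (rule Dv_impL)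
  then have "SDerivable (add_mset (Imp A B) (add_mset (Imp B A) {#B#})) (Some A)" by (simp add: add_mset_commute)
  then have "SDerivable (add_mset (Iff A B) {#B#}) (Some A)" unfolding Iff_def by (rule Dv_andL)
  from cut_adm[OF assms this] show "SDerivable {#B#} (Some A)" by simp
qed

lemma Dv_id1: "SDerivable {#A#} (Some A)"
  using Dv_id[of A "{#}"] by simp

lemma Dv_mp: assumes "SDerivable {#} (Some (Imp A B))" "SDerivable {#} (Some A)" shows "SDerivable {#} (Some B)"
proof -
  have "SDerivable (add_mset (Imp A B) {#A#}) (Some A)" using Dv_id[of A "{#Imp A B#}"] by (simp add: add_mset_commute)
  moreover have "SDerivable (add_mset B {#A#}) (Some B)" by (rule Dv_id)
  ultimately have "SDerivable (add_mset (Imp A B) {#A#}) (Some B)" by (rule Dv_impL)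
  from cut_adm[OF assms(1) this] have "SDerivable {#A#} (Some B)" by simp
  then have "SDerivable (add_mset A {#}) (Some B)" by simp
  from cut_adm[OF assms(2) this] show ?thesis by simp
qed

lemma Dv_box1: "SDerivable {#\<phi>#} (Some \<rho>) \<Longrightarrow> SDerivable {#\<rho>#} (Some \<phi>) \<Longrightarrow> SDerivable {#\<psi>#} (Some \<chi>)
   \<Longrightarrow> SDerivable {#CBox \<phi> \<psi>#} (Some (CBox \<rho> \<chi>))"
  by (rule Dv_box[of "[(\<phi>, \<psi>)]"]) (simp_all add: EQv_def)

lemma Dv_dia1: "SDerivable {#\<phi>#} (Some \<rho>) \<Longrightarrow> SDerivable {#\<rho>#} (Some \<phi>) \<Longrightarrow> SDerivable {#\<psi>#} (Some \<chi>)
   \<Longrightarrow> SDerivable {#CDia \<phi> \<psi>#} (Some (CDia \<rho> \<chi>))"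
  by (rule Dv_MR[of \<phi> \<psi> "[]" "[]" _ "Some \<chi>"]) (simp_all add: EQv_def tgtv_def)

lemma complete: "ConstCKCEM A \<Longrightarrow> SDerivable {#} (Some A)"
proof (induction rule: ConstCKCEM.induct)
  case (A1 \<phi> \<psi>)
  have "SDerivable (add_mset \<psi> {#\<phi>#}) (Some \<phi>)" using Dv_id[of \<phi> "{#\<psi>#}"] by (simp add: add_mset_commute)
  then show ?case by (intro Dv_impR) simp
next
  case (A2 \<phi> \<psi> \<chi>)
  let ?G = "{#\<phi>, Imp \<phi> \<psi>, Imp \<phi> (Imp \<psi> \<chi>)#}"
  have "SDerivable (add_mset (Imp \<phi> (Imp \<psi> \<chi>)) {#\<phi>, Imp \<phi> \<psi>#}) (Some \<chi>)"
  proof (rule Dv_impL)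
    show "SDerivable (add_mset (Imp \<phi> (Imp \<psi> \<chi>)) {#\<phi>, Imp \<phi> \<psi>#}) (Some \<phi>)"
      using Dv_id[of \<phi> "{#Imp \<phi> (Imp \<psi> \<chi>), Imp \<phi> \<psi>#}"] by (simp add: add_mset_commute)
    have "SDerivable (add_mset (Imp \<phi> \<psi>) {#Imp \<psi> \<chi>, \<phi>#}) (Some \<chi>)"
    proof (rule Dv_impL)
      show "SDerivable (add_mset (Imp \<phi> \<psi>) {#Imp \<psi> \<chi>, \<phi>#}) (Some \<phi>)"
        using Dv_id[of \<phi> "{#Imp \<phi> \<psi>, Imp \<psi> \<chi>#}"] by (simp add: add_mset_commute)
      have "SDerivable (add_mset (Imp \<psi> \<chi>) {#\<psi>, \<phi>#}) (Some \<chi>)"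
      proof (rule Dv_impL)
        show "SDerivable (add_mset (Imp \<psi> \<chi>) {#\<psi>, \<phi>#}) (Some \<psi>)"
          using Dv_id[of \<psi> "{#Imp \<psi> \<chi>, \<phi>#}"] by (simp add: add_mset_commute)
        show "SDerivable (add_mset \<chi> {#\<psi>, \<phi>#}) (Some \<chi>)" by (rule Dv_id)
      qed
      then show "SDerivable (add_mset \<psi> {#Imp \<psi> \<chi>, \<phi>#}) (Some \<chi>)" by (simp add: add_mset_commute)
    qed
    then show "SDerivable (add_mset (Imp \<psi> \<chi>) {#\<phi>, Imp \<phi> \<psi>#}) (Some \<chi>)" by (simp add: add_mset_commute)
  qed
  then have "SDerivable (add_mset \<phi> (add_mset (Imp \<phi> \<psi>) (add_mset (Imp \<phi> (Imp \<psi> \<chi>)) {#}))) (Some \<chi>)"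
    by (simp add: add_mset_commute)
  then show ?case by (intro Dv_impR)
next
  case (A3 \<phi> \<psi>)
  have "SDerivable (add_mset \<phi> (add_mset \<psi> {#})) (Some \<phi>)" by (rule Dv_id)
  then have "SDerivable (add_mset (And \<phi> \<psi>) {#}) (Some \<phi>)" by (rule Dv_andL)
  then show ?case by (rule Dv_impR)
next
  case (A4 \<phi> \<psi>)
  have "SDerivable (add_mset \<phi> (add_mset \<psi> {#})) (Some \<psi>)" using Dv_id[of \<psi> "{#\<phi>#}"] by (simp add: add_mset_commute)
  then have "SDerivable (add_mset (And \<phi> \<psi>) {#}) (Some \<psi>)" by (rule Dv_andL)
  then show ?case by (rule Dv_impR)
next
  case (A5 \<phi> \<psi>)
  have "SDerivable (add_mset \<psi> {#\<phi>#}) (Some \<phi>)" using Dv_id[of \<phi> "{#\<psi>#}"] by (simp add: add_mset_commute)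
  moreover have "SDerivable (add_mset \<psi> {#\<phi>#}) (Some \<psi>)" by (rule Dv_id)
  ultimately have "SDerivable (add_mset \<psi> {#\<phi>#}) (Some (And \<phi> \<psi>))" by (rule Dv_andR)
  then have "SDerivable {#\<phi>#} (Some (Imp \<psi> (And \<phi> \<psi>)))" by (rule Dv_impR)
  then show ?case by (rule Dv_impR)
next
  case (A6 \<phi> \<psi>)
  have "SDerivable {#\<phi>#} (Some (Or \<phi> \<psi>))" by (rule Dv_orR1) (rule Dv_id1)
  then show ?case by (intro Dv_impR) simp
next
  case (A7 \<psi> \<phi>)
  have "SDerivable {#\<psi>#} (Some (Or \<phi> \<psi>))" by (rule Dv_orR2) (rule Dv_id1)
  then show ?case by (intro Dv_impR) simp
next
  case (A8 \<phi> \<chi> \<psi>)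
  let ?G = "{#Imp \<psi> \<chi>, Imp \<phi> \<chi>#}"
  have a: "SDerivable (add_mset \<phi> ?G) (Some \<chi>)"
  proof -
    have "SDerivable (add_mset (Imp \<phi> \<chi>) {#\<phi>, Imp \<psi> \<chi>#}) (Some \<chi>)"
    proof (rule Dv_impL)
      show "SDerivable (add_mset (Imp \<phi> \<chi>) {#\<phi>, Imp \<psi> \<chi>#}) (Some \<phi>)"
        using Dv_id[of \<phi> "{#Imp \<phi> \<chi>, Imp \<psi> \<chi>#}"] by (simp add: add_mset_commute)
      show "SDerivable (add_mset \<chi> {#\<phi>, Imp \<psi> \<chi>#}) (Some \<chi>)" by (rule Dv_id)
    qed
    then show ?thesis by (simp add: add_mset_commute)
  qed
  have b: "SDerivable (add_mset \<psi> ?G) (Some \<chi>)"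
  proof -
    have "SDerivable (add_mset (Imp \<psi> \<chi>) {#\<psi>, Imp \<phi> \<chi>#}) (Some \<chi>)"
    proof (rule Dv_impL)
      show "SDerivable (add_mset (Imp \<psi> \<chi>) {#\<psi>, Imp \<phi> \<chi>#}) (Some \<psi>)"
        using Dv_id[of \<psi> "{#Imp \<psi> \<chi>, Imp \<phi> \<chi>#}"] by (simp add: add_mset_commute)
      show "SDerivable (add_mset \<chi> {#\<psi>, Imp \<phi> \<chi>#}) (Some \<chi>)" by (rule Dv_id)
    qed
    then show ?thesis by (simp add: add_mset_commute)
  qed
  have "SDerivable (add_mset (Or \<phi> \<psi>) ?G) (Some \<chi>)" using a b by (rule Dv_orL)
  then have "SDerivable (add_mset (Imp \<psi> \<chi>) {#Imp \<phi> \<chi>#}) (Some (Imp (Or \<phi> \<psi>) \<chi>))" by (rule Dv_impR)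
  then have "SDerivable (add_mset (Imp \<phi> \<chi>) {#}) (Some (Imp (Imp \<psi> \<chi>) (Imp (Or \<phi> \<psi>) \<chi>)))" by (rule Dv_impR)
  then show ?case by (rule Dv_impR)
next
  case (A9 \<phi>)
  have "SDerivable (add_mset Bot {#}) (Some \<phi>)" by (rule Dv_botL) simp
  then show ?case by (rule Dv_impR)
next
  case (MP \<phi> \<psi>) then show ?case using Dv_mp by blast
next
  case (CM_Box \<phi> \<psi> \<chi>)
  have e: "SDerivable {#\<phi>#} (Some \<phi>)" by (rule Dv_id1)
  have "SDerivable {#And \<psi> \<chi>#} (Some \<psi>)" using Dv_id[of \<psi> "{#\<chi>#}"] by (intro Dv_andL) simp
  then have 1: "SDerivable {#CBox \<phi> (And \<psi> \<chi>)#} (Some (CBox \<phi> \<psi>))" by (rule Dv_box1[OF e e])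
  have "SDerivable {#And \<psi> \<chi>#} (Some \<chi>)" using Dv_id[of \<chi> "{#\<psi>#}"] by (intro Dv_andL) (simp add: add_mset_commute)
  then have 2: "SDerivable {#CBox \<phi> (And \<psi> \<chi>)#} (Some (CBox \<phi> \<chi>))" by (rule Dv_box1[OF e e])
  from Dv_andR[OF 1 2] have "SDerivable (add_mset (CBox \<phi> (And \<psi> \<chi>)) {#}) (Some (And (CBox \<phi> \<psi>) (CBox \<phi> \<chi>)))" by simp
  then show ?case by (rule Dv_impR)
next
  case (CC_Box \<phi> \<psi> \<chi>)
  have "SDerivable {#CBox \<phi> \<psi>, CBox \<phi> \<chi>#} (Some (CBox \<phi> (And \<psi> \<chi>)))"
  proof (rule Dv_box[of "[(\<phi>, \<psi>), (\<phi>, \<chi>)]"])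
    show "EQv \<phi> [(\<phi>, \<psi>), (\<phi>, \<chi>)]" by (simp add: EQv_def Dv_id1)
    have "SDerivable {#\<psi>, \<chi>#} (Some \<psi>)" by (rule Dv_id)
    moreover have "SDerivable {#\<psi>, \<chi>#} (Some \<chi>)" using Dv_id[of \<chi> "{#\<psi>#}"] by (simp add: add_mset_commute)
    ultimately show "SDerivable (sn [(\<phi>, \<psi>), (\<phi>, \<chi>)]) (Some (And \<psi> \<chi>))" by (simp add: Dv_andR)
  qed simp
  then have "SDerivable (add_mset (And (CBox \<phi> \<psi>) (CBox \<phi> \<chi>)) {#}) (Some (CBox \<phi> (And \<psi> \<chi>)))" by (intro Dv_andL) simp
  then show ?case by (rule Dv_impR)
next
  case (CN_Box \<phi>)
  show ?case
  proof (rule Dv_box[of "[]"])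
    have "SDerivable (add_mset Bot {#}) (Some Bot)" by (rule Dv_botL) simp
    then have "SDerivable {#} (Some (Imp Bot Bot))" by (rule Dv_impR)
    then show "SDerivable (sn []) (Some Top)" unfolding Top_def Neg_def by simp
  qed (simp_all add: EQv_def)
next
  case (CN_Dia \<phi>)
  have "SDerivable {#CDia \<phi> Bot#} (Some Bot)"
    by (rule Dv_MR[of \<phi> Bot "[]" "[]" _ None]) (simp_all add: EQv_def tgtv_def Dv_botL)
  then show ?case unfolding Neg_def by (intro Dv_impR) simp
next
  case (CK_Dia \<phi> \<psi> \<chi>)
  have "SDerivable {#CDia \<phi> \<psi>, CBox \<phi> (Imp \<psi> \<chi>)#} (Some (CDia \<phi> \<chi>))"
  proof (rule Dv_MR[of \<phi> \<psi> "[(\<phi>, Imp \<psi> \<chi>)]" "[]" _ "Some \<chi>"])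
    show "EQv \<phi> [(\<phi>, Imp \<psi> \<chi>)]" by (simp add: EQv_def Dv_id1)
    show "tgtv \<phi> (Some \<chi>) (Some (CDia \<phi> \<chi>))" by (simp add: tgtv_def Dv_id1)
    have "SDerivable (add_mset (Imp \<psi> \<chi>) {#\<psi>#}) (Some \<chi>)"
    proof (rule Dv_impL)
      show "SDerivable (add_mset (Imp \<psi> \<chi>) {#\<psi>#}) (Some \<psi>)" using Dv_id[of \<psi> "{#Imp \<psi> \<chi>#}"] by (simp add: add_mset_commute)
      show "SDerivable (add_mset \<chi> {#\<psi>#}) (Some \<chi>)" by (rule Dv_id)
    qed
    then show "SDerivable (add_mset \<psi> (sn [(\<phi>, Imp \<psi> \<chi>)] + sn [])) (Some \<chi>)" by (simp add: add_mset_commute)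
  qed (simp_all add: EQv_def)
  then have "SDerivable (add_mset (CDia \<phi> \<psi>) (add_mset (CBox \<phi> (Imp \<psi> \<chi>)) {#})) (Some (CDia \<phi> \<chi>))"
    by simp
  then have "SDerivable (add_mset (CBox \<phi> (Imp \<psi> \<chi>)) {#}) (Some (Imp (CDia \<phi> \<psi>) (CDia \<phi> \<chi>)))"
    by (rule Dv_impR)
  then show ?case by (rule Dv_impR)
next
  case (CEM_Dia \<phi> \<psi> \<chi>)
  have "SDerivable {#CDia \<phi> \<psi>, CDia \<phi> \<chi>#} (Some (CDia \<phi> (And \<psi> \<chi>)))"
  proof (rule Dv_MR[of \<phi> \<psi> "[]" "[(\<phi>, \<chi>)]" _ "Some (And \<psi> \<chi>)"])
    show "EQv \<phi> [(\<phi>, \<chi>)]" by (simp add: EQv_def Dv_id1)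
    show "tgtv \<phi> (Some (And \<psi> \<chi>)) (Some (CDia \<phi> (And \<psi> \<chi>)))" by (simp add: tgtv_def Dv_id1)
    have "SDerivable {#\<psi>, \<chi>#} (Some \<psi>)" by (rule Dv_id)
    moreover have "SDerivable {#\<psi>, \<chi>#} (Some \<chi>)" using Dv_id[of \<chi> "{#\<psi>#}"] by (simp add: add_mset_commute)
    ultimately show "SDerivable (add_mset \<psi> (sn [] + sn [(\<phi>, \<chi>)])) (Some (And \<psi> \<chi>))" by (simp add: Dv_andR)
  qed (simp_all add: EQv_def)
  then have "SDerivable (add_mset (And (CDia \<phi> \<psi>) (CDia \<phi> \<chi>)) {#}) (Some (CDia \<phi> (And \<psi> \<chi>)))" by (intro Dv_andL) simp
  then show ?case by (rule Dv_impR)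
next
  case (RA_Box \<phi> \<rho> \<psi>)
  note s = Dv_iff_split[OF RA_Box.IH]
  show ?case by (rule Dv_iff; rule Dv_box1) (use s Dv_id1 in auto)
next
  case (RC_Box \<psi> \<chi> \<phi>)
  note s = Dv_iff_split[OF RC_Box.IH]
  show ?case by (rule Dv_iff; rule Dv_box1) (use s Dv_id1 in auto)
next
  case (RA_Dia \<phi> \<rho> \<psi>)
  note s = Dv_iff_split[OF RA_Dia.IH]
  show ?case by (rule Dv_iff; rule Dv_dia1) (use s Dv_id1 in auto)
next
  case (RC_Dia \<psi> \<chi> \<phi>)
  note s = Dv_iff_split[OF RC_Dia.IH]
  show ?case by (rule Dv_iff; rule Dv_dia1) (use s Dv_id1 in auto)
qed


section \<open>The formula interpretation\<close>

lemma big_and_Dv: "\<Gamma>s \<noteq> [] \<Longrightarrow> SDerivable (mset \<Gamma>s) (Some (big_and \<Gamma>s))"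
proof (induction \<Gamma>s rule: big_and.induct)
  case 1 then show ?case by simp
next
  case (2 \<phi>) then show ?case using Dv_id1 by simp
next
  case (3 \<phi> \<psi> \<phi>s)
  have a: "SDerivable (mset (\<phi> # \<psi> # \<phi>s)) (Some \<phi>)" using Dv_id[of \<phi> "mset (\<psi> # \<phi>s)"] by simp
  have "SDerivable (mset (\<psi> # \<phi>s)) (Some (big_and (\<psi> # \<phi>s)))" using 3 by simp
  then have b: "SDerivable (mset (\<phi> # \<psi> # \<phi>s)) (Some (big_and (\<psi> # \<phi>s)))" by (rule Dv_weak) simp
  show ?case using Dv_andR[OF a b] by simp
qed

lemma big_and_Hy: "\<Gamma>s \<noteq> [] \<Longrightarrow> x \<in> set \<Gamma>s \<Longrightarrow> Hy {big_and \<Gamma>s} x"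
proof (induction \<Gamma>s rule: big_and.induct)
  case 1 then show ?case by simp
next
  case (2 \<phi>) then show ?case by (simp add: Hy.hyp)
next
  case (3 \<phi> \<psi> \<phi>s)
  show ?case
  proof (cases "x = \<phi>")
    case True
    have "Hy {big_and (\<phi> # \<psi> # \<phi>s)} \<phi>" by (rule Hy_andE1[of _ _ "big_and (\<psi> # \<phi>s)"]) (simp add: Hy.hyp)
    then show ?thesis using True by simp
  next
    case False
    then have a: "Hy {big_and (\<psi> # \<phi>s)} x" using 3 by simp
    have b: "Hy {big_and (\<phi> # \<psi> # \<phi>s)} (big_and (\<psi> # \<phi>s))" by (rule Hy_andE2[of _ \<phi>]) (simp add: Hy.hyp)
    show ?thesis by (rule Hy_subst[OF a]) (use b in simp)
  qed
qed

lemma iota_sound: "SDerivable (mset \<Gamma>s) \<Delta> \<Longrightarrow> ConstCKCEM (iota \<Gamma>s \<Delta>)"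
proof -
  assume "SDerivable (mset \<Gamma>s) \<Delta>"
  then obtain n where "SD n (mset \<Gamma>s) \<Delta>" unfolding SDerivable_def by blast
  then have H: "Hy (set \<Gamma>s) (big_or \<Delta>)" using SD_sound by fastforce
  show ?thesis
  proof (cases "\<Gamma>s = []")
    case True then show ?thesis using H by (simp add: iota_def Hy_empty)
  next
    case False
    have "Hy {big_and \<Gamma>s} (big_or \<Delta>)" by (rule Hy_subst[OF H]) (rule big_and_Hy[OF False])
    then have "Hy {} (Imp (big_and \<Gamma>s) (big_or \<Delta>))" by (rule Hy_ded)
    then show ?thesis using False by (simp add: iota_def Hy_empty)
  qed
qed

lemma iota_complete: "ConstCKCEM (iota \<Gamma>s \<Delta>) \<Longrightarrow> SDerivable (mset \<Gamma>s) \<Delta>"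
proof -
  assume "ConstCKCEM (iota \<Gamma>s \<Delta>)"
  then have C: "SDerivable {#} (Some (iota \<Gamma>s \<Delta>))" by (rule complete)
  have last: "SDerivable (add_mset (big_or \<Delta>) X) \<Delta>" for X
  proof (cases \<Delta>)
    case None then show ?thesis by (simp add: Dv_botL)
  next
    case (Some \<psi>) then show ?thesis by (simp add: Dv_id)
  qed
  show ?thesis
  proof (cases "\<Gamma>s = []")
    case True
    then have "SDerivable {#} (Some (big_or \<Delta>))" using C by (simp add: iota_def)
    from cut_adm[OF this last[of "{#}"]] show ?thesis using True by simp
  next
    case False
    then have C': "SDerivable {#} (Some (Imp (big_and \<Gamma>s) (big_or \<Delta>)))" using C by (simp add: iota_def)
    have "SDerivable (add_mset (Imp (big_and \<Gamma>s) (big_or \<Delta>)) (mset \<Gamma>s)) (Some (big_and \<Gamma>s))"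
      by (rule Dv_weak[OF big_and_Dv[OF False]]) simp
    then have "SDerivable (add_mset (Imp (big_and \<Gamma>s) (big_or \<Delta>)) (mset \<Gamma>s)) \<Delta>"
      using last by (rule Dv_impL)
    from cut_adm[OF C' this] show ?thesis by simp
  qed
qed

theorem theorem13:
  shows "(\<forall>n \<Gamma> \<Delta> \<phi>. SD n \<Gamma> \<Delta> \<longrightarrow> SD n (add_mset \<phi> \<Gamma>) \<Delta>)
       \<and> (\<forall>n \<Gamma> \<phi>. SD n \<Gamma> None \<longrightarrow> SD n \<Gamma> (Some \<phi>))
       \<and> (\<forall>n \<Gamma> \<Delta> \<phi>. SD n (add_mset \<phi> (add_mset \<phi> \<Gamma>)) \<Delta> \<longrightarrow> SD n (add_mset \<phi> \<Gamma>) \<Delta>)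
       \<and> (\<forall>\<Gamma> \<Gamma>' \<Delta> \<phi>. SDerivable \<Gamma> (Some \<phi>) \<longrightarrow> SDerivable (add_mset \<phi> \<Gamma>') \<Delta>
              \<longrightarrow> SDerivable (\<Gamma> + \<Gamma>') \<Delta>)
       \<and> (\<forall>(\<Gamma>s :: 'a fm list) \<Delta>. SDerivable (mset \<Gamma>s) \<Delta> \<longleftrightarrow> ConstCKCEM (iota \<Gamma>s \<Delta>))"
proof (intro conjI allI impI)
  fix n \<Gamma> \<Delta> \<phi> assume "SD n \<Gamma> \<Delta>"
  then show "SD n (add_mset \<phi> \<Gamma>) \<Delta>" by (rule SD_weak) simp
next
  fix n \<Gamma> \<phi> assume "SD n \<Gamma> None"
  then show "SD n \<Gamma> (Some \<phi>)" by (rule SD_wR)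
next
  fix n \<Gamma> \<Delta> \<phi> assume "SD n (add_mset \<phi> (add_mset \<phi> \<Gamma>)) \<Delta>"
  then show "SD n (add_mset \<phi> \<Gamma>) \<Delta>" by (rule SD_contr)
next
  fix \<Gamma> \<Gamma>' \<Delta> \<phi> assume "SDerivable \<Gamma> (Some \<phi>)" "SDerivable (add_mset \<phi> \<Gamma>') \<Delta>"
  then show "SDerivable (\<Gamma> + \<Gamma>') \<Delta>" by (rule cut_adm)
next
  fix \<Gamma>s :: "'a fm list" and \<Delta>
  show "SDerivable (mset \<Gamma>s) \<Delta> \<longleftrightarrow> ConstCKCEM (iota \<Gamma>s \<Delta>)"
    using iota_sound iota_complete by blast
qed

end
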